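(* Let $N\ge2$ and $1\le q<2$. Then \[ \sup\left\{\mathcal F_{2,q}(\Omega):\ \Omega\subset\mathbb{R}^N\text{ simply connected open set}\right\}=+\infty, \qquad\text{where }\ \mathcal F_{2,q}(\Omega)=\lambda_{2,q}(\Omega)\left(\frac{|\Omega|^{\frac12+\frac1q}}{P(\Omega)}\right)^2. \]
   Context: $\lambda_{2,q}(\Omega):=\inf\{\int_\Omega|\nabla\psi|^2\,dx:\ \psi\in C_0^\infty(\Omega),\ \int_\Omega|\psi|^q\,dx=1\}$; $|\Omega|$ is Lebesgue measure and $P(\Omega)$ the De Giorgi perimeter. *)

theory Defs
  imports "HOL-Analysis.Analysis"
begin

definition Cinf :: "(real^'n \<Rightarrow> real) \<Rightarrow> bool" where
  "Cinf f \<longleftrightarrow> (\<exists>D. f \<in> D \<and> (\<forall>g\<in>D. g differentiable_on UNIV \<and>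
      (\<forall>i. (\<lambda>x. frechet_derivative g (at x) (axis i 1)) \<in> D)))"

definition tsupp :: "(real^'n \<Rightarrow> 'b::zero) \<Rightarrow> (real^'n) set" where
  "tsupp f = closure {x. f x \<noteq> 0}"

definition Cinf0 :: "(real^'n) set \<Rightarrow> (real^'n \<Rightarrow> real) \<Rightarrow> bool" where
  "Cinf0 \<Omega> \<psi> \<longleftrightarrow> Cinf \<psi> \<and> compact (tsupp \<psi>) \<and> tsupp \<psi> \<subseteq> \<Omega>"

definition grad_sq :: "(real^'n \<Rightarrow> real) \<Rightarrow> real^'n \<Rightarrow> real" where
  "grad_sq \<psi> x = (\<Sum>i\<in>UNIV. (frechet_derivative \<psi> (at x) (axis i 1))\<^sup>2)"

definition lambda2q :: "real \<Rightarrow> (real^'n) set \<Rightarrow> real" where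
  "lambda2q q \<Omega> = Inf {integral UNIV (grad_sq \<psi>) | \<psi>. Cinf0 \<Omega> \<psi> \<and>
      integral UNIV (\<lambda>x. \<bar>\<psi> x\<bar> powr q) = 1}"

definition divergence :: "(real^'n \<Rightarrow> real^'n) \<Rightarrow> real^'n \<Rightarrow> real" where
  "divergence \<phi> x = (\<Sum>i\<in>UNIV. frechet_derivative (\<lambda>y. \<phi> y $ i) (at x) (axis i 1))"

definition perimeter :: "(real^'n) set \<Rightarrow> ereal" where
  "perimeter \<Omega> = (SUP \<phi> \<in> {\<phi>. (\<forall>i. Cinf (\<lambda>x. \<phi> x $ i)) \<and> compact (tsupp \<phi>) \<and>
        (\<forall>x. norm (\<phi> x) \<le> 1)}. ereal (integral \<Omega> (divergence \<phi>)))"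

definition F2q :: "real \<Rightarrow> (real^'n) set \<Rightarrow> real" where
  "F2q q \<Omega> = lambda2q q \<Omega> *
     ((measure lebesgue \<Omega>) powr (1/2 + 1/q) / real_of_ereal (perimeter \<Omega>))\<^sup>2"

end

theory Submission
  imports Defs "HOL-Computational_Algebra.Polynomial"
begin


lemma exp_ge_pow_fact:
  fixes x :: real assumes "0 \<le> x" shows "x ^ k / fact k \<le> exp x"
proof -
  have "summable (\<lambda>n. x ^ n /\<^sub>R fact n)" by (rule summable_exp_generic)
  hence "sum (\<lambda>n. x ^ n /\<^sub>R fact n) {k} \<le> (\<Sum>n. x ^ n /\<^sub>R fact n)"
    by (intro sum_le_suminf) (use assms in auto)
  thus ?thesis by (simp add: exp_def divide_simps)
qed

lemma exp_inv_bound: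
  fixes u :: real assumes "0 < u"
  shows "exp (-1/u) / u ^ n \<le> fact (n+2) * u^2"
proof -
  have "(1/u) ^ (n+2) / fact (n+2) \<le> exp (1/u)"
    by (rule exp_ge_pow_fact) (use assms in simp)
  hence "1 \<le> fact (n+2) * u^(n+2) * exp (1/u)"
    using assms by (simp add: divide_simps power_one_over mult_ac split: if_splits)
  hence "exp (-1/u) \<le> fact (n+2) * u^(n+2) * exp (1/u) * exp (-1/u)"
    by (simp add: mult_le_cancel_right1)
  also have "\<dots> = fact (n+2) * u^(n+2)" by (simp add: exp_minus field_simps)
  finally show ?thesis using assms by (simp add: divide_simps power_add mult_ac power2_eq_square)
qed

definition bq :: "real poly \<Rightarrow> nat \<Rightarrow> real \<Rightarrow> real" where
  "bq p n t = (if \<bar>t\<bar> < 1 then poly p t * exp (-1/(1-t\<^sup>2)) / (1-t\<^sup>2)^n else 0)"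

definition dnum :: "real poly \<Rightarrow> nat \<Rightarrow> real poly" where
  "dnum p n = pderiv p * [:1,0,-1:]^2 + p * [:0,-2:] + p * smult (2 * real n) ([:0,1:] * [:1,0,-1:])"

lemma poly_dnum: "poly (dnum p n) t = poly (pderiv p) t * (1-t\<^sup>2)\<^sup>2 - 2*t*poly p t + 2*real n*t*(1-t\<^sup>2)*poly p t"
  by (simp add: dnum_def algebra_simps power2_eq_square)

lemma alg_dnum:
  fixes u t P P' e :: real assumes "u \<noteq> 0"
  shows "((P' * e - e*(2*t)*P/(u*u)) * u^n + P*e*(real n*(2*t*u^(n-Suc 0))))/(u^n*u^n)
     = (P'*u\<^sup>2 - 2*t*P + 2*real n*t*u*P) * e/(u*(u*u^n))"
proof (cases n)
  case 0 then show ?thesis using assms by (simp add: field_simps power2_eq_square)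
next
  case (Suc m) then show ?thesis using assms by (simp add: field_simps power2_eq_square)
qed

lemma bq_deriv_inside:
  assumes "\<bar>t\<bar> < 1"
  shows "(bq p n has_real_derivative bq (dnum p n) (n+2) t) (at t)"
proof -
  let ?u = "1 - t\<^sup>2"
  have u: "?u > 0" using assms by (simp add: abs_square_less_1)
  have "((\<lambda>t. poly p t * exp (-1/(1-t\<^sup>2)) / (1-t\<^sup>2)^n) has_real_derivative
     poly (dnum p n) t * exp (-1/?u) / ?u^(n+2)) (at t)"
    using u apply (auto intro!: derivative_eq_intros poly_DERIV simp: power2_eq_square)
    apply (subst alg_dnum)
    apply (auto simp: poly_dnum power2_eq_square)
    done
  then have "((\<lambda>t. poly p t * exp (-1/(1-t\<^sup>2)) / (1-t\<^sup>2)^n) has_real_derivative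
     bq (dnum p n) (n+2) t) (at t)" using assms by (simp add: bq_def)
  thus ?thesis
    by (rule has_field_derivative_transform_within_open[where S="{t. \<bar>t\<bar> < 1}"])
       (use assms in \<open>auto simp: bq_def intro!: open_Collect_less continuous_intros\<close>)
qed

lemma poly_bound_M: fixes p :: "real poly" shows "\<exists>M>0. \<forall>s. \<bar>s\<bar> \<le> 1 \<longrightarrow> \<bar>poly p s\<bar> \<le> M"
proof -
  have "compact (poly p ` {-1..1::real})"
    by (intro compact_continuous_image continuous_intros) auto
  then obtain M where "M > 0" "\<forall>y\<in>poly p ` {-1..1::real}. norm y \<le> M"
    using compact_imp_bounded bounded_pos by metis
  thus ?thesis by (intro exI[of _ M]) (auto simp: abs_le_iff)
qed

lemma bq_small:
  assumes "\<bar>t\<bar> = 1"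
  shows "\<exists>C. \<forall>s. \<bar>bq p n s\<bar> \<le> C * \<bar>s - t\<bar>\<^sup>2"
proof -
  obtain M where M: "M > 0" "\<And>s. \<bar>s\<bar> \<le> 1 \<Longrightarrow> \<bar>poly p s\<bar> \<le> M"
    using poly_bound_M by blast
  have "\<bar>bq p n s\<bar> \<le> (4 * M * fact (n+2)) * \<bar>s - t\<bar>\<^sup>2" for s
  proof (cases "\<bar>s\<bar> < 1")
    case True
    define u where "u = 1 - s\<^sup>2"
    have u: "u > 0" using True by (simp add: u_def abs_square_less_1)
    have sq: "0 \<le> (1-s)*(1-s)" "0 \<le> (1+s)*(1+s)" by simp_all
    have u2: "u \<le> 2 * \<bar>s - t\<bar>"
      using assms True sq unfolding u_def by (cases "t = 1") (auto simp: abs_if power2_eq_square algebra_simps split: if_splits)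
    have "\<bar>bq p n s\<bar> = \<bar>poly p s\<bar> * (exp (-1/u) / u^n)"
      using True u by (simp add: bq_def u_def abs_mult)
    also have "\<dots> \<le> M * (fact (n+2) * u\<^sup>2)"
      using M(2)[of s] True exp_inv_bound[OF u, of n] u by (intro mult_mono) auto
    also have "u\<^sup>2 \<le> (2 * \<bar>s - t\<bar>)\<^sup>2" using u u2 by (intro power_mono) auto
    hence "M * (fact (n+2) * u\<^sup>2) \<le> M * (fact (n+2) * (2 * \<bar>s - t\<bar>)\<^sup>2)"
      using M(1) by (intro mult_left_mono) auto
    finally have "\<bar>bq p n s\<bar> \<le> M * (fact (n+2) * (2 * \<bar>s - t\<bar>)\<^sup>2)" .
    moreover have "M * (fact (n+2) * (2 * \<bar>s - t\<bar>)\<^sup>2) = (4 * M * fact (n+2)) * \<bar>s - t\<bar>\<^sup>2"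
      by (simp only: power_mult_distrib) (simp add: mult_ac)
    ultimately show ?thesis by simp
  next
    case False then show ?thesis using M(1) by (simp add: bq_def)
  qed
  thus ?thesis by blast
qed

lemma bq_deriv_boundary:
  assumes "\<bar>t\<bar> = 1"
  shows "(bq p n has_real_derivative 0) (at t)"
proof -
  obtain C where C: "\<And>s. \<bar>bq p n s\<bar> \<le> C * \<bar>s - t\<bar>\<^sup>2" using bq_small[OF assms] by blast
  have bt: "bq p n t = 0" using assms by (simp add: bq_def)
  have "((\<lambda>s. (bq p n s - bq p n t) / (s - t)) \<longlongrightarrow> 0) (at t)"
  proof (rule Lim_null_comparison)
    show "\<forall>\<^sub>F s in at t. norm ((bq p n s - bq p n t) / (s - t)) \<le> C * \<bar>s - t\<bar>"
    proof (rule always_eventually, rule allI)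
      fix s
      show "norm ((bq p n s - bq p n t) / (s - t)) \<le> C * \<bar>s - t\<bar>"
      proof (cases "s = t")
        case True then show ?thesis using C[of s] by simp
      next
        case False
        hence "\<bar>s - t\<bar> > 0" by simp
        thus ?thesis using C[of s] bt by (simp add: divide_simps power2_eq_square abs_mult mult_ac)
      qed
    qed
    show "((\<lambda>s. C * \<bar>s - t\<bar>) \<longlongrightarrow> 0) (at t)"
      by (rule tendsto_eq_intros refl)+ (auto intro!: tendsto_eq_intros)
  qed
  thus ?thesis by (simp add: has_field_derivative_iff)
qed

lemma bq_deriv:
  "(bq p n has_real_derivative bq (dnum p n) (n+2) t) (at t)"
proof -
  consider "\<bar>t\<bar> < 1" | "\<bar>t\<bar> = 1" | "\<bar>t\<bar> > 1" by linarith
  thus ?thesis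
  proof cases
    case 1 then show ?thesis by (rule bq_deriv_inside)
  next
    case 2 then show ?thesis using bq_deriv_boundary[OF 2, of p n] by (simp add: bq_def)
  next
    case 3
    have "((\<lambda>_. 0) has_real_derivative 0) (at t)" by simp
    hence "(bq p n has_real_derivative 0) (at t)"
      by (rule has_field_derivative_transform_within_open[where S="{t. \<bar>t\<bar> > 1}"])
         (use 3 in \<open>auto simp: bq_def intro!: open_Collect_less continuous_intros\<close>)
    thus ?thesis using 3 by (simp add: bq_def)
  qed
qed



definition Sfam :: "(real \<Rightarrow> real) set" where
  "Sfam = {h. \<exists>a b c p n. h = (\<lambda>t. a * bq p n (b*t+c))}"

lemma Sfam_deriv: "h \<in> Sfam \<Longrightarrow> \<exists>h'\<in>Sfam. \<forall>t. (h has_real_derivative h' t) (at t)"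
proof -
  assume "h \<in> Sfam"
  then obtain a b c p n where h: "h = (\<lambda>t. a * bq p n (b*t+c))" by (auto simp: Sfam_def)
  define h' where "h' = (\<lambda>t. (a*b) * bq (dnum p n) (n+2) (b*t+c))"
  have "h' \<in> Sfam" unfolding Sfam_def h'_def by blast
  moreover have "(h has_real_derivative h' t) (at t)" for t
    unfolding h h'_def
    by (rule derivative_eq_intros DERIV_chain2[OF bq_deriv] refl | simp)+
  ultimately show ?thesis by blast
qed

definition Dfam :: "(real^'n \<Rightarrow> real) set" where
  "Dfam = {G. \<exists>h. (\<forall>i. h i \<in> Sfam) \<and> G = (\<lambda>x. \<Prod>i\<in>UNIV. h i (x$i))}"

lemma comp_nth_deriv:
  assumes "\<And>t. (g has_real_derivative g' t) (at t)"
  shows "((\<lambda>x::real^'n. g (x$i)) has_derivative (\<lambda>y. g' (x$i) * y$i)) (at x)"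
proof -
  have "((\<lambda>x::real^'n. x$i) has_derivative (\<lambda>y. y$i)) (at x)"
    by (rule bounded_linear_imp_has_derivative) (rule bounded_linear_vec_nth)
  moreover have "(g has_derivative (*) (g' (x$i))) (at ((\<lambda>x::real^'n. x$i) x))"
    using assms has_field_derivative_def by blast
  ultimately have "(g \<circ> (\<lambda>x::real^'n. x$i) has_derivative (*) (g' (x$i)) \<circ> (\<lambda>y. y$i)) (at x)"
    by (rule diff_chain_at)
  thus ?thesis by (simp add: o_def)
qed

lemma Dfam_deriv:
  fixes G :: "real^'n \<Rightarrow> real"
  assumes "G \<in> Dfam"
  shows "\<exists>G'. (\<forall>k. G' k \<in> Dfam) \<and> (\<forall>x. (G has_derivative (\<lambda>y. \<Sum>k\<in>UNIV. G' k x * y$k)) (at x))"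
proof -
  obtain h where h: "\<And>i. h i \<in> Sfam" and G: "G = (\<lambda>x. \<Prod>i\<in>UNIV. h i (x$i))"
    using assms by (auto simp: Dfam_def)
  have "\<forall>i. \<exists>h'\<in>Sfam. \<forall>t. (h i has_real_derivative h' t) (at t)"
    using Sfam_deriv h by blast
  then obtain h' where h': "\<And>i. h' i \<in> Sfam" "\<And>i t. (h i has_real_derivative h' i t) (at t)"
    by metis
  define G' where "G' = (\<lambda>k (x::real^'n). \<Prod>i\<in>UNIV. (h(k := h' k)) i (x$i))"
  have "G' k \<in> Dfam" for k
    unfolding Dfam_def G'_def using h h' by (auto intro!: exI[of _ "h(k := h' k)"])
  moreover have "(G has_derivative (\<lambda>y. \<Sum>k\<in>UNIV. G' k x * y$k)) (at x)" for x
  proof -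
    have "((\<lambda>x. \<Prod>i\<in>UNIV. h i (x$i)) has_derivative
          (\<lambda>y. \<Sum>i\<in>UNIV. (h' i (x$i) * y$i) * (\<Prod>j\<in>UNIV - {i}. h j (x$j)))) (at x)"
      by (rule has_derivative_prod) (rule comp_nth_deriv[OF h'(2)])
    moreover have "(h' i (x$i) * y$i) * (\<Prod>j\<in>UNIV - {i}. h j (x$j)) = G' i x * y$i" for i y
    proof -
      have "G' i x = (\<Prod>j\<in>UNIV - {i}. h j (x$j)) * h' i (x$i)"
        unfolding G'_def
        by (subst prod.remove[of UNIV i]) (auto simp: mult_ac intro!: prod.cong)
      thus ?thesis by simp
    qed
    ultimately show ?thesis unfolding G by simp
  qed
  ultimately show ?thesis by blast
qed

lemma Dfam_differentiable: "G \<in> Dfam \<Longrightarrow> G differentiable at x"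
  using Dfam_deriv differentiable_def by blast

lemma Dfam_partial:
  fixes G :: "real^'n \<Rightarrow> real"
  assumes "G \<in> Dfam"
  shows "(\<lambda>x. frechet_derivative G (at x) (axis k 1)) \<in> Dfam"
proof -
  obtain G' where G': "\<And>k. G' k \<in> Dfam" "\<And>x. (G has_derivative (\<lambda>y. \<Sum>k\<in>UNIV. G' k x * y$k)) (at x)"
    using Dfam_deriv[OF assms] by blast
  have "frechet_derivative G (at x) (axis k 1) = G' k x" for x
  proof -
    have "frechet_derivative G (at x) = (\<lambda>y. \<Sum>k\<in>UNIV. G' k x * y$k)"
      using frechet_derivative_at[OF G'(2)] by simp
    thus ?thesis by (simp add: axis_def if_distrib cong: if_cong)
  qed
  hence "(\<lambda>x. frechet_derivative G (at x) (axis k 1)) = G' k" by auto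
  thus ?thesis using G'(1) by simp
qed

lemma Dfam_Cinf: "G \<in> Dfam \<Longrightarrow> Cinf G"
  unfolding Cinf_def
  by (intro exI[of _ Dfam]) (auto simp: Dfam_partial differentiable_on_def Dfam_differentiable
        intro: differentiable_at_withinI)



lemma Cinf_diff: "Cinf f \<Longrightarrow> f differentiable at x"
  unfolding Cinf_def differentiable_on_def by auto

lemma Cinf_partial: "Cinf f \<Longrightarrow> Cinf (\<lambda>x. frechet_derivative f (at x) (axis k 1))"
  unfolding Cinf_def by blast

lemma Cinf_cont: "Cinf f \<Longrightarrow> continuous_on UNIV f"
  using Cinf_diff differentiable_imp_continuous_within continuous_at_imp_continuous_on by blast

lemma Cinf_partial_cont: "Cinf f \<Longrightarrow> continuous_on UNIV (\<lambda>x. frechet_derivative f (at x) (axis k 1))"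
  by (intro Cinf_cont Cinf_partial)

lemma Cinf_line_deriv:
  assumes "Cinf f"
  shows "((\<lambda>s. f (x + s *\<^sub>R e)) has_real_derivative frechet_derivative f (at (x + s *\<^sub>R e)) e) (at s)"
proof -
  have f: "(f has_derivative frechet_derivative f (at (x + s *\<^sub>R e))) (at (x + s *\<^sub>R e))"
    using Cinf_diff[OF assms] frechet_derivative_works by blast
  have l: "((\<lambda>s. x + s *\<^sub>R e) has_derivative (\<lambda>t. t *\<^sub>R e)) (at s)"
    by (auto intro!: derivative_eq_intros)
  have "((\<lambda>s. f (x + s *\<^sub>R e)) has_derivative (\<lambda>t. frechet_derivative f (at (x + s *\<^sub>R e)) (t *\<^sub>R e))) (at s)"
    using has_derivative_compose[OF l f] by (simp add: o_def)
  moreover have "linear (frechet_derivative f (at (x + s *\<^sub>R e)))"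
    using f has_derivative_linear by blast
  ultimately have "((\<lambda>s. f (x + s *\<^sub>R e)) has_derivative (\<lambda>t. t * frechet_derivative f (at (x + s *\<^sub>R e)) e)) (at s)"
    by (simp add: linear_scale)
  moreover have "(\<lambda>t. t * frechet_derivative f (at (x + s *\<^sub>R e)) e) = (*) (frechet_derivative f (at (x + s *\<^sub>R e)) e)"
    by (auto simp: fun_eq_iff)
  ultimately show ?thesis by (simp add: has_field_derivative_def)
qed

lemma tsupp_zero: fixes f :: "real^'n \<Rightarrow> real" shows "x \<notin> tsupp f \<Longrightarrow> f x = 0"
  unfolding tsupp_def using closure_subset[of "{x. f x \<noteq> 0}"] by auto

lemma tsupp_deriv_zero:
  fixes f :: "real^'n \<Rightarrow> real"
  assumes "Cinf f" "x \<notin> tsupp f"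
  shows "frechet_derivative f (at x) v = 0"
proof -
  have "open (- tsupp f)" unfolding tsupp_def by auto
  have "frechet_derivative f (at x) = frechet_derivative (\<lambda>_. 0) (at x)"
    by (rule frechet_derivative_transform_within_open[OF Cinf_diff[OF assms(1)] \<open>open (- tsupp f)\<close>])
       (use assms(2) tsupp_zero in auto)
  thus ?thesis by (simp add: frechet_derivative_const)
qed

lemma integrable_compact_support:
  fixes g :: "'a::euclidean_space \<Rightarrow> real"
  assumes "continuous_on UNIV g" "compact K" "\<And>x. x \<notin> K \<Longrightarrow> g x = 0"
  shows "g integrable_on UNIV"
proof -
  obtain a where a: "K \<subseteq> cbox (-a) a"
    using bounded_subset_cbox_symmetric compact_imp_bounded[OF assms(2)] by metis
  have "g integrable_on cbox (-a) a"
    by (rule integrable_continuous) (rule continuous_on_subset[OF assms(1)], auto)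
  thus ?thesis by (rule integrable_on_superset) (use a assms(3) in auto)
qed

lemma integral_pos_cart:
  fixes f :: "real^'n \<Rightarrow> real"
  assumes "continuous_on UNIV f" "open S" "p \<in> S" "0 < f p" "\<And>x. x \<in> S \<Longrightarrow> 0 \<le> f x"
    "f integrable_on S"
  shows "0 < integral S f"
proof -
  have "continuous (at p) f" using assms(1) continuous_on_eq_continuous_at by blast
  then obtain r1 where r1: "r1 > 0" "\<And>y. dist y p < r1 \<Longrightarrow> dist (f y) (f p) < f p / 2"
    using assms(4) unfolding continuous_at_eps_delta by (metis half_gt_zero_iff)
  obtain r2 where r2: "r2 > 0" "ball p r2 \<subseteq> S" using assms(2,3) open_contains_ball by blast
  define \<delta> where "\<delta> = min r1 r2"
  define \<epsilon> where "\<epsilon> = \<delta> / (2 * real CARD('n))"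
  have \<delta>: "\<delta> > 0" using r1 r2 by (simp add: \<delta>_def)
  have \<epsilon>: "\<epsilon> > 0" using \<delta> by (simp add: \<epsilon>_def)
  define Q where "Q = cbox (\<chi> i. p$i - \<epsilon>) (\<chi> i. p$i + \<epsilon>)"
  have Qsub: "dist y p < \<delta>" if "y \<in> Q" for y
  proof -
    have "dist y p = norm (y - p)" by (simp add: dist_norm)
    also have "\<dots> \<le> (\<Sum>i\<in>UNIV. \<bar>(y - p)$i\<bar>)" by (rule norm_le_l1_cart)
    also have "\<dots> \<le> (\<Sum>i\<in>(UNIV::'n set). \<epsilon>)"
    proof (intro sum_mono)
      fix i
      have "p$i - \<epsilon> \<le> y$i \<and> y$i \<le> p$i + \<epsilon>" using that by (simp add: Q_def mem_box_cart)
      thus "\<bar>(y - p)$i\<bar> \<le> \<epsilon>" by auto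
    qed
    also have "\<dots> = \<delta> / 2" using \<delta> by (simp add: \<epsilon>_def)
    finally show ?thesis using \<delta> by simp
  qed
  have QS: "Q \<subseteq> S" using Qsub r2 by (auto simp: \<delta>_def dist_commute)
  have fQ: "f y \<ge> f p / 2" if "y \<in> Q" for y
    using r1(2)[of y] Qsub[OF that] by (auto simp: \<delta>_def dist_real_def; smt (verit))
  have "p \<in> Q" using \<epsilon> by (simp add: Q_def mem_box_cart)
  hence Qne: "Q \<noteq> {}" by auto
  have cQ: "Henstock_Kurzweil_Integration.content Q = (2*\<epsilon>) ^ CARD('n)"
    using Qne by (simp add: Q_def content_cbox_cart)
  have "0 < Henstock_Kurzweil_Integration.content Q * (f p / 2)" using cQ \<epsilon> assms(4) by simp
  also have "Henstock_Kurzweil_Integration.content Q * (f p / 2) = integral Q (\<lambda>_. f p / 2)"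
    by (simp add: Q_def integral_const)
  also have "\<dots> \<le> integral Q f"
    by (rule integral_le) (use fQ in \<open>auto simp: Q_def intro!: integrable_continuous
        continuous_on_subset[OF assms(1)]\<close>)
  also have "\<dots> \<le> integral S f"
    by (rule integral_subset_le[OF QS _ assms(6)]) (use assms(5) in \<open>auto simp: Q_def intro!: integrable_continuous continuous_on_subset[OF assms(1)]\<close>)
  finally show ?thesis .
qed



lemma cs1d:
  fixes g :: "real \<Rightarrow> real"
  assumes "a \<le> b" "continuous_on {a..b} g"
  shows "(integral {a..b} g)\<^sup>2 \<le> (b - a) * integral {a..b} (\<lambda>s. (g s)\<^sup>2)"
proof (cases "a = b")
  case True then show ?thesis by simp
next
  case False
  hence L: "b - a > 0" using assms(1) by simp
  define I where "I = integral {a..b} g"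
  define J where "J = integral {a..b} (\<lambda>s. (g s)\<^sup>2)"
  define m where "m = I / (b - a)"
  have ig: "g integrable_on {a..b}" by (rule integrable_continuous_interval[OF assms(2)])
  have ig2: "(\<lambda>s. (g s)\<^sup>2) integrable_on {a..b}"
    by (rule integrable_continuous_interval) (intro continuous_intros assms(2))
  have "0 \<le> integral {a..b} (\<lambda>s. (g s - m)\<^sup>2)"
    by (rule integral_nonneg) (auto intro!: integrable_continuous_interval continuous_intros assms(2))
  also have "integral {a..b} (\<lambda>s. (g s - m)\<^sup>2) = integral {a..b} (\<lambda>s. (g s)\<^sup>2 - (2*m) * g s + m\<^sup>2)"
    by (rule integral_cong) (simp add: power2_eq_square algebra_simps)
  also have "\<dots> = J - (2*m) * I + m\<^sup>2 * (b - a)"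
  proof -
    have "((\<lambda>s. (g s)\<^sup>2 - (2*m) * g s + m\<^sup>2) has_integral (J - (2*m) * I + Henstock_Kurzweil_Integration.content {a..b} *\<^sub>R m\<^sup>2)) {a..b}"
      unfolding I_def J_def
      by (intro has_integral_add has_integral_diff has_integral_mult_right integrable_integral ig ig2 has_integral_const_real)
    thus ?thesis using assms(1) by (simp add: integral_unique)
  qed
  also have "\<dots> = J - I\<^sup>2 / (b - a)"
  proof -
    have *: "\<And>L::real. L > 0 \<Longrightarrow> (2*(I/L)) * I - (I/L)\<^sup>2 * L = I\<^sup>2 / L"
      by (simp add: field_simps power2_eq_square)
    show ?thesis using *[OF L] by (simp add: m_def)
  qed
  finally have "I\<^sup>2 / (b - a) \<le> J" by simp
  thus ?thesis using L by (simp add: I_def J_def divide_simps mult_ac)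
qed

lemma poincare_pt:
  fixes f :: "real^'n \<Rightarrow> real"
  assumes f: "Cinf f" and z: "f (x + s0 *\<^sub>R axis k 1) = 0" and s0: "\<bar>s0\<bar> \<le> h"
  shows "(f x)\<^sup>2 \<le> h * integral {-h..h} (\<lambda>s. (frechet_derivative f (at (x + s *\<^sub>R axis k 1)) (axis k 1))\<^sup>2)"
proof -
  define e :: "real^'n" where "e = axis k 1"
  define F where "F = (\<lambda>s. f (x + s *\<^sub>R e))"
  define F' where "F' = (\<lambda>s. frechet_derivative f (at (x + s *\<^sub>R e)) e)"
  have cF': "continuous_on UNIV F'"
  proof -
    have "continuous_on UNIV ((\<lambda>y. frechet_derivative f (at y) e) \<circ> (\<lambda>s. x + s *\<^sub>R e))"
      by (rule continuous_on_compose) (auto intro!: continuous_intros Cinf_partial_cont[OF f, of k, unfolded e_def[symmetric]] intro: continuous_on_subset)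
    thus ?thesis by (simp add: F'_def o_def)
  qed
  have dF: "(F has_real_derivative F' s) (at s)" for s
    unfolding F_def F'_def by (rule Cinf_line_deriv[OF f])
  define a where "a = min 0 s0"
  define b where "b = max 0 s0"
  have ab: "a \<le> b" by (simp add: a_def b_def)
  have "(F' has_integral F b - F a) {a..b}"
    by (rule fundamental_theorem_of_calculus[OF ab])
       (use dF in \<open>auto simp: has_real_derivative_iff_has_vector_derivative intro: has_vector_derivative_at_within\<close>)
  hence intF: "integral {a..b} F' = F b - F a" by (rule integral_unique)
  have "\<bar>F b - F a\<bar> = \<bar>f x\<bar>"
    using z by (cases "s0 \<ge> 0") (auto simp: a_def b_def F_def e_def)
  hence "(f x)\<^sup>2 = (integral {a..b} F')\<^sup>2" using intF by (metis power2_abs)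
  also have "\<dots> \<le> (b - a) * integral {a..b} (\<lambda>s. (F' s)\<^sup>2)"
    by (rule cs1d[OF ab]) (rule continuous_on_subset[OF cF'], auto)
  also have "\<dots> \<le> h * integral {-h..h} (\<lambda>s. (F' s)\<^sup>2)"
  proof (rule mult_mono)
    show "b - a \<le> h" using s0 by (auto simp: a_def b_def)
    show "integral {a..b} (\<lambda>s. (F' s)\<^sup>2) \<le> integral {-h..h} (\<lambda>s. (F' s)\<^sup>2)"
      by (rule integral_subset_le) (use s0 in \<open>auto simp: a_def b_def intro!: integrable_continuous_interval continuous_intros continuous_on_subset[OF cF']\<close>)
    show "0 \<le> h" using s0 by simp
    show "0 \<le> integral {a..b} (\<lambda>s. (F' s)\<^sup>2)"
      by (rule integral_nonneg) (auto intro!: integrable_continuous_interval continuous_intros continuous_on_subset[OF cF'])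
  qed
  finally show ?thesis by (simp add: F'_def e_def)
qed



lemma lborel_translate_nn:
  fixes f :: "real^'n \<Rightarrow> ennreal" and v :: "real^'n"
  assumes [measurable]: "f \<in> borel_measurable borel"
  shows "(\<integral>\<^sup>+x. f (x + v) \<partial>lborel) = (\<integral>\<^sup>+x. f x \<partial>lborel)"
proof -
  have "(\<integral>\<^sup>+x. f x \<partial>lborel) = (\<integral>\<^sup>+x. f x \<partial>(distr lborel borel ((+) v)))"
    by (simp add: lborel_distr_plus)
  also have "\<dots> = (\<integral>\<^sup>+x. f (v + x) \<partial>lborel)"
    by (rule nn_integral_distr) auto
  finally show ?thesis by (simp add: add.commute)
qed

lemma lborel_translate:
  fixes f :: "real^'n \<Rightarrow> real" and v :: "real^'n"
  assumes [measurable]: "f \<in> borel_measurable borel"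
  shows "(\<integral>x. f (x + v) \<partial>lborel) = (\<integral>x. f x \<partial>lborel)"
proof -
  have "(\<integral>x. f x \<partial>lborel) = (\<integral>x. f x \<partial>(distr lborel borel ((+) v)))"
    by (simp add: lborel_distr_plus)
  also have "\<dots> = (\<integral>x. f (v + x) \<partial>lborel)"
    by (rule integral_distr) auto
  finally show ?thesis by (simp add: add.commute)
qed

lemma pair_lb: "pair_sigma_finite (lborel :: (real^'n::finite) measure) (lborel :: real measure)"
  by (simp add: pair_sigma_finite_def sigma_finite_lborel)

lemma nn_translate_int:
  fixes f :: "real^'n \<Rightarrow> ennreal" and e :: "real^'n"
  assumes [measurable]: "f \<in> borel_measurable borel" and ab: "a \<le> b"
  shows "(\<integral>\<^sup>+x. (\<integral>\<^sup>+s. f (x + s *\<^sub>R e) * indicator {a..b} s \<partial>lborel) \<partial>lborel)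
         = ennreal (b - a) * (\<integral>\<^sup>+x. f x \<partial>lborel)"
proof -
  have m: "(\<lambda>(x, s). f (x + s *\<^sub>R e) * indicator {a..b} s) \<in> borel_measurable (lborel \<Otimes>\<^sub>M lborel)"
    by measurable
  have "(\<integral>\<^sup>+x. (\<integral>\<^sup>+s. f (x + s *\<^sub>R e) * indicator {a..b} s \<partial>lborel) \<partial>lborel)
      = (\<integral>\<^sup>+s. (\<integral>\<^sup>+x. f (x + s *\<^sub>R e) * indicator {a..b} s \<partial>lborel) \<partial>lborel)"
    using pair_sigma_finite.Fubini'[OF pair_lb m] by simp
  also have "\<dots> = (\<integral>\<^sup>+s. (\<integral>\<^sup>+x. f x \<partial>lborel) * indicator {a..b} s \<partial>lborel)"
    by (intro nn_integral_cong) (simp add: nn_integral_multc lborel_translate_nn)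
  also have "\<dots> = (\<integral>\<^sup>+x. f x \<partial>lborel) * ennreal (b - a)"
    using ab by (simp add: nn_integral_cmult_indicator mult.commute)
  finally show ?thesis by (simp add: mult.commute)
qed

lemma L_translate_int:
  fixes F :: "real^'n \<Rightarrow> real" and e :: "real^'n"
  assumes F: "integrable lborel F" and ab: "a \<le> b"
  shows "integrable lborel (\<lambda>x. \<integral>s. F (x + s *\<^sub>R e) * indicator {a..b} s \<partial>lborel)"
    and "(\<integral>x. (\<integral>s. F (x + s *\<^sub>R e) * indicator {a..b} s \<partial>lborel) \<partial>lborel) = (b - a) * (\<integral>x. F x \<partial>lborel)"
proof -
  have Fm[measurable]: "F \<in> borel_measurable borel"
    using F borel_measurable_integrable measurable_lborel1 by (metis measurable_cong_sets sets_lborel)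
  define H where "H = (\<lambda>x s. F (x + s *\<^sub>R e) * indicator {a..b} s)"
  have Hm: "(\<lambda>(x, s). H x s) \<in> borel_measurable (lborel \<Otimes>\<^sub>M lborel)"
    unfolding H_def by measurable
  have "(\<integral>\<^sup>+p. ennreal (norm ((\<lambda>(x, s). H x s) p)) \<partial>(lborel \<Otimes>\<^sub>M lborel))
      = (\<integral>\<^sup>+x. (\<integral>\<^sup>+s. ennreal (norm (H x s)) \<partial>lborel) \<partial>lborel)"
    by (subst lborel.nn_integral_fst[symmetric]) (use Hm in auto)
  also have "\<dots> = (\<integral>\<^sup>+x. (\<integral>\<^sup>+s. ennreal \<bar>F (x + s *\<^sub>R e)\<bar> * indicator {a..b} s \<partial>lborel) \<partial>lborel)"
    by (intro nn_integral_cong) (auto simp: H_def indicator_def abs_mult)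
  also have "\<dots> = ennreal (b - a) * (\<integral>\<^sup>+x. ennreal \<bar>F x\<bar> \<partial>lborel)"
    by (rule nn_translate_int[OF _ ab]) measurable
  also have "\<dots> < \<infinity>"
    using F unfolding integrable_iff_bounded by (simp add: ennreal_mult_less_top)
  finally have Hint: "integrable (lborel \<Otimes>\<^sub>M lborel) (\<lambda>(x, s). H x s)"
    using Hm by (simp add: integrable_iff_bounded)
  show "integrable lborel (\<lambda>x. \<integral>s. F (x + s *\<^sub>R e) * indicator {a..b} s \<partial>lborel)"
    using pair_sigma_finite.integrable_fst[OF pair_lb Hint] by (simp add: H_def)
  have "(\<integral>x. (\<integral>s. H x s \<partial>lborel) \<partial>lborel) = (\<integral>s. (\<integral>x. H x s \<partial>lborel) \<partial>lborel)"
    using pair_sigma_finite.Fubini_integral[OF pair_lb Hint] by simp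
  also have "\<dots> = (\<integral>s. (\<integral>x. F x \<partial>lborel) * indicator {a..b} s \<partial>lborel)"
    by (intro Bochner_Integration.integral_cong refl) (simp add: H_def lborel_translate)
  also have "\<dots> = (\<integral>x. F x \<partial>lborel) * (b - a)"
    using ab by (simp add: integral_indicator)
  finally show "(\<integral>x. (\<integral>s. F (x + s *\<^sub>R e) * indicator {a..b} s \<partial>lborel) \<partial>lborel) = (b - a) * (\<integral>x. F x \<partial>lborel)"
    by (simp add: H_def mult.commute)
qed



lemma poincare:
  fixes \<psi> :: "real^'n \<Rightarrow> real"
  assumes psi: "Cinf \<psi>" "compact (tsupp \<psi>)" and ij: "i1 \<noteq> i2" and h: "h > 0"
    and H: "\<And>x. (\<exists>s. \<bar>s\<bar> \<le> h \<and> \<psi> (x + s *\<^sub>R axis i1 1) = 0) \<or> (\<exists>s. \<bar>s\<bar> \<le> h \<and> \<psi> (x + s *\<^sub>R axis i2 1) = 0)"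
  shows "integral UNIV (\<lambda>x. (\<psi> x)\<^sup>2) \<le> 2*h\<^sup>2 * integral UNIV (grad_sq \<psi>)"
proof -
  define d where "d k = (\<lambda>y. frechet_derivative \<psi> (at y) (axis k 1))" for k
  define g where "g k = (\<lambda>y. (d k y)\<^sup>2)" for k
  have gc: "continuous_on UNIV (g k)" for k
    unfolding g_def d_def by (intro continuous_intros Cinf_partial_cont[OF psi(1)])
  have gm[measurable]: "g k \<in> borel_measurable borel" for k
    by (rule borel_measurable_continuous_onI[OF gc])
  have gz: "g k y = 0" if "y \<notin> tsupp \<psi>" for k y
    unfolding g_def d_def using tsupp_deriv_zero[OF psi(1) that] by simp
  have gint: "(g k has_integral integral UNIV (g k)) UNIV" for k
    by (rule integrable_integral, rule integrable_compact_support[OF gc psi(2) gz])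
  have gnn: "0 \<le> g k y" for k y by (simp add: g_def)
  have pc: "continuous_on UNIV (\<lambda>x. (\<psi> x)\<^sup>2)" by (intro continuous_intros Cinf_cont[OF psi(1)])
  have pint: "((\<lambda>x. (\<psi> x)\<^sup>2) has_integral integral UNIV (\<lambda>x. (\<psi> x)\<^sup>2)) UNIV"
    by (rule integrable_integral, rule integrable_compact_support[OF pc psi(2)]) (simp add: tsupp_zero)
  define I where "I k x = integral {-h..h} (\<lambda>s. g k (x + s *\<^sub>R axis k 1))" for k x
  define J where "J k x = (\<integral>\<^sup>+s. ennreal (g k (x + s *\<^sub>R axis k 1)) * indicator {-h..h} s \<partial>lborel)" for k x
  have Inn: "0 \<le> I k x" for k x
    unfolding I_def by (rule integral_nonneg) (auto intro!: integrable_continuous_interval continuous_on_compose2[OF gc] continuous_intros gnn)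
  have IJ: "J k x = ennreal (I k x)" for k x
  proof -
    have hi: "((\<lambda>s. g k (x + s *\<^sub>R axis k 1)) has_integral I k x) {-h..h}"
      unfolding I_def by (rule integrable_integral) (auto intro!: integrable_continuous_interval continuous_on_compose2[OF gc] continuous_intros)
    show ?thesis unfolding J_def by (rule nn_integral_has_integral_lebesgue'[OF _ hi]) (simp add: gnn)
  qed
  have Jm[measurable]: "J k \<in> borel_measurable lborel" for k
    unfolding J_def by measurable
  have pt: "ennreal ((\<psi> x)\<^sup>2) \<le> ennreal h * J i1 x + ennreal h * J i2 x" for x
  proof -
    have "(\<psi> x)\<^sup>2 \<le> h * I i1 x + h * I i2 x"
    proof (cases "\<exists>s. \<bar>s\<bar> \<le> h \<and> \<psi> (x + s *\<^sub>R axis i1 1) = 0")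
      case True
      then obtain s where s: "\<bar>s\<bar> \<le> h" "\<psi> (x + s *\<^sub>R axis i1 1) = 0" by blast
      have "(\<psi> x)\<^sup>2 \<le> h * I i1 x"
        using poincare_pt[OF psi(1) s(2) s(1)] by (simp add: I_def g_def d_def)
      moreover have "0 \<le> h * I i2 x" using h Inn by simp
      ultimately show ?thesis by linarith
    next
      case False
      then obtain s where s: "\<bar>s\<bar> \<le> h" "\<psi> (x + s *\<^sub>R axis i2 1) = 0" using H by blast
      have "(\<psi> x)\<^sup>2 \<le> h * I i2 x"
        using poincare_pt[OF psi(1) s(2) s(1)] by (simp add: I_def g_def d_def)
      moreover have "0 \<le> h * I i1 x" using h Inn by simp
      ultimately show ?thesis by linarith
    qed
    hence "ennreal ((\<psi> x)\<^sup>2) \<le> ennreal (h * I i1 x + h * I i2 x)" by (rule ennreal_leI)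
    also have "\<dots> = ennreal h * J i1 x + ennreal h * J i2 x"
      using h Inn by (simp add: IJ ennreal_plus ennreal_mult)
    finally show ?thesis .
  qed
  define G where "G k = integral UNIV (g k)" for k
  have Gnn: "0 \<le> G k" for k unfolding G_def by (rule integral_nonneg) (use gint gnn in auto)
  have intJ: "(\<integral>\<^sup>+x. J k x \<partial>lborel) = ennreal (2*h) * ennreal (G k)" for k
  proof -
    have "(\<integral>\<^sup>+x. J k x \<partial>lborel) = ennreal (h - (-h)) * (\<integral>\<^sup>+x. ennreal (g k x) \<partial>lborel)"
      unfolding J_def by (rule nn_translate_int) (use h in auto)
    also have "(\<integral>\<^sup>+x. ennreal (g k x) \<partial>lborel) = ennreal (G k)"
      using nn_integral_has_integral_lebesgue'[of UNIV "g k", OF _ gint] by (simp add: gnn G_def)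
    finally show ?thesis by simp
  qed
  have "ennreal (integral UNIV (\<lambda>x. (\<psi> x)\<^sup>2)) = (\<integral>\<^sup>+x. ennreal ((\<psi> x)\<^sup>2) \<partial>lborel)"
    using nn_integral_has_integral_lebesgue'[of UNIV "\<lambda>x. (\<psi> x)\<^sup>2", OF _ pint] by simp
  also have "\<dots> \<le> (\<integral>\<^sup>+x. ennreal h * J i1 x + ennreal h * J i2 x \<partial>lborel)"
    by (rule nn_integral_mono) (rule pt)
  also have "\<dots> = (\<integral>\<^sup>+x. ennreal h * J i1 x \<partial>lborel) + (\<integral>\<^sup>+x. ennreal h * J i2 x \<partial>lborel)"
    by (rule nn_integral_add) measurable
  also have "\<dots> = ennreal h * (\<integral>\<^sup>+x. J i1 x \<partial>lborel) + ennreal h * (\<integral>\<^sup>+x. J i2 x \<partial>lborel)"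
    by (simp only: nn_integral_cmult[OF Jm])
  also have "\<dots> = ennreal (2*h\<^sup>2 * (G i1 + G i2))"
  proof -
    have e: "2*h\<^sup>2 * (G i1 + G i2) = h * (2*h * G i1) + h * (2*h * G i2)"
      by (simp add: power2_eq_square algebra_simps)
    have p: "0 \<le> 2*h" "0 \<le> h" "0 \<le> 2*h * G i1" "0 \<le> 2*h * G i2" "0 \<le> h * (2*h * G i1)" "0 \<le> h * (2*h * G i2)"
      using h Gnn by auto
    show ?thesis unfolding intJ e
      by (simp only: ennreal_plus[OF p(5,6)] ennreal_mult[OF p(2,3)] ennreal_mult[OF p(2,4)]
                     ennreal_mult[OF p(1) Gnn])
  qed
  finally have 1: "integral UNIV (\<lambda>x. (\<psi> x)\<^sup>2) \<le> 2*h\<^sup>2 * (G i1 + G i2)"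
    using h Gnn by (subst (asm) ennreal_le_iff) auto
  have "G i1 + G i2 = (\<Sum>k\<in>{i1,i2}. G k)" using ij by simp
  also have "\<dots> \<le> (\<Sum>k\<in>UNIV. G k)" by (rule sum_mono2) (use Gnn in auto)
  also have "\<dots> = integral UNIV (grad_sq \<psi>)"
  proof -
    have e: "grad_sq \<psi> = (\<lambda>x. \<Sum>k\<in>UNIV. g k x)" by (auto simp: grad_sq_def g_def d_def fun_eq_iff)
    show ?thesis unfolding G_def e by (subst integral_sum) (auto intro: has_integral_integrable[OF gint])
  qed
  finally have "G i1 + G i2 \<le> integral UNIV (grad_sq \<psi>)" .
  hence "2*h\<^sup>2 * (G i1 + G i2) \<le> 2*h\<^sup>2 * integral UNIV (grad_sq \<psi>)"
    by (rule mult_left_mono) simp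
  with 1 show ?thesis by linarith
qed



lemma seg_bound:
  fixes f :: "real^'n \<Rightarrow> real"
  assumes f: "Cinf f" and fb: "\<And>y. \<bar>f y\<bar> \<le> 1"
  shows "\<bar>integral {\<alpha>..\<beta>} (\<lambda>s. frechet_derivative f (at (x + s *\<^sub>R e)) e)\<bar> \<le> 2"
proof (cases "\<alpha> \<le> \<beta>")
  case True
  have "((\<lambda>s. frechet_derivative f (at (x + s *\<^sub>R e)) e) has_integral
          f (x + \<beta> *\<^sub>R e) - f (x + \<alpha> *\<^sub>R e)) {\<alpha>..\<beta>}"
    by (rule fundamental_theorem_of_calculus[OF True])
       (auto simp: has_real_derivative_iff_has_vector_derivative[symmetric] intro: DERIV_subset Cinf_line_deriv[OF f])
  hence "integral {\<alpha>..\<beta>} (\<lambda>s. frechet_derivative f (at (x + s *\<^sub>R e)) e) = f (x + \<beta> *\<^sub>R e) - f (x + \<alpha> *\<^sub>R e)"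
    by (rule integral_unique)
  thus ?thesis using fb[of "x + \<beta> *\<^sub>R e"] fb[of "x + \<alpha> *\<^sub>R e"] by simp
next
  case False then show ?thesis by simp
qed

lemma line_int_bound:
  fixes f :: "real^'n \<Rightarrow> real" and a b x :: "real^'n" and i :: 'n
  assumes f: "Cinf f" and fb: "\<And>y. \<bar>f y\<bar> \<le> 1"
  defines "e \<equiv> axis i 1 :: real^'n"
  shows "integral {0..1} (\<lambda>s. if x + s *\<^sub>R e \<in> box a b then frechet_derivative f (at (x + s *\<^sub>R e)) e else 0)
          \<le> 2 * indicator (box (a - e) b) x"
proof -
  define k where "k = (\<lambda>s. frechet_derivative f (at (x + s *\<^sub>R e)) e)"
  define T where "T = {s. x + s *\<^sub>R e \<in> box a b}"
  have "integral {0..1} (\<lambda>s. if x + s *\<^sub>R e \<in> box a b then k s else 0) = integral (T \<inter> {0..1}) k"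
    using integral_restrict_Int[of "{0..1}" T k] by (simp add: T_def)
  also have "\<dots> \<le> 2 * indicator (box (a - e) b) x"
  proof (cases "x \<in> box (a - e) b")
    case False
    have "T \<inter> {0..1} = {}"
    proof (rule ccontr)
      assume "T \<inter> {0..1} \<noteq> {}"
      then obtain s where s: "0 \<le> s" "s \<le> 1" "x + s *\<^sub>R e \<in> box a b" by (auto simp: T_def)
      have "x \<in> box (a - e) b"
        unfolding mem_box_cart
      proof
        fix j
        have "a$j < x$j + s * (if j = i then 1 else 0) \<and> x$j + s * (if j = i then 1 else 0) < b$j"
          using s(3) by (simp add: mem_box_cart e_def axis_def)
        thus "(a - e)$j < x$j \<and> x$j < b$j"
          using s(1,2) by (cases "j = i") (auto simp: e_def axis_def)
      qed
      with False show False by simp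
    qed
    thus ?thesis by simp
  next
    case True
    show ?thesis
    proof (cases "\<forall>j. j \<noteq> i \<longrightarrow> a$j < x$j \<and> x$j < b$j")
      case False
      hence "T = {}" by (auto simp: T_def mem_box_cart e_def axis_def)
      thus ?thesis using True by simp
    next
      case oth: True
      define \<alpha> where "\<alpha> = max 0 (a$i - x$i)"
      define \<beta> where "\<beta> = min 1 (b$i - x$i)"
      have Teq: "T = {s. a$i - x$i < s \<and> s < b$i - x$i}"
        using oth by (auto simp: T_def mem_box_cart e_def axis_def)
      have sub1: "T \<inter> {0..1} - {\<alpha>..\<beta>} = {}" by (auto simp: Teq \<alpha>_def \<beta>_def)
      have sub2: "{\<alpha>..\<beta>} - T \<inter> {0..1} \<subseteq> {\<alpha>, \<beta>}" by (auto simp: Teq \<alpha>_def \<beta>_def)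
      have "integral (T \<inter> {0..1}) k = integral {\<alpha>..\<beta>} k"
      proof (rule integral_spike_set)
        have "{s \<in> T \<inter> {0..1} - {\<alpha>..\<beta>}. k s \<noteq> 0} = {}" using sub1 by blast
        thus "negligible {s \<in> T \<inter> {0..1} - {\<alpha>..\<beta>}. k s \<noteq> 0}" by (simp only: negligible_empty)
        show "negligible {s \<in> {\<alpha>..\<beta>} - T \<inter> {0..1}. k s \<noteq> 0}"
          by (rule negligible_subset[of "{\<alpha>,\<beta>}"]) (use sub2 in auto)
      qed
      also have "\<dots> \<le> 2" using seg_bound[OF f fb, of \<alpha> \<beta> x e] by (simp add: k_def)
      finally show ?thesis using True by simp
    qed
  qed
  finally show ?thesis unfolding k_def .
qed

lemma comp_bound:
  fixes f :: "real^'n \<Rightarrow> real" and a b :: "real^'n" and i :: 'n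
  assumes f: "Cinf f" and fc: "compact (tsupp f)" and fb: "\<And>y. \<bar>f y\<bar> \<le> 1"
  shows "(\<lambda>x. frechet_derivative f (at x) (axis i 1)) integrable_on box a b"
    and "integral (box a b) (\<lambda>x. frechet_derivative f (at x) (axis i 1))
           \<le> 2 * measure lborel (box (a - axis i 1) b)"
proof -
  define e :: "real^'n" where "e = axis i 1"
  define g where "g = (\<lambda>x. frechet_derivative f (at x) e)"
  have gc: "continuous_on UNIV g" unfolding g_def e_def by (rule Cinf_partial_cont[OF f])
  have gm[measurable]: "g \<in> borel_measurable borel" by (rule borel_measurable_continuous_onI[OF gc])
  have gz: "g x = 0" if "x \<notin> tsupp f" for x
    unfolding g_def by (rule tsupp_deriv_zero[OF f that])
  obtain B where B: "\<And>x. \<bar>g x\<bar> \<le> B"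
  proof -
    have "compact (g ` tsupp f)" by (rule compact_continuous_image[OF continuous_on_subset[OF gc] fc]) auto
    then obtain B0 where "\<forall>y\<in>g ` tsupp f. norm y \<le> B0" using compact_imp_bounded bounded_iff by metis
    hence "\<bar>g x\<bar> \<le> max B0 0" for x using gz[of x] by (cases "x \<in> tsupp f") auto
    thus ?thesis using that by blast
  qed
  have B0: "0 \<le> B" using B[of 0] by linarith
  define Fc where "Fc = (\<lambda>x. indicator (box a b) x *\<^sub>R g x)"
  have Fi: "integrable lborel Fc"
    unfolding Fc_def
    by (rule integrableI_bounded_set_indicator[where B=B])
       (use emeasure_lborel_box_finite[of a b] in \<open>auto simp: B intro!: AE_I2\<close>)
  have Fm[measurable]: "Fc \<in> borel_measurable borel" unfolding Fc_def by measurable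
  have eqHK: "integral (box a b) g = (\<integral>x. Fc x \<partial>lborel)"
  proof -
    have "integral (box a b) g = integral UNIV (\<lambda>x. if x \<in> box a b then g x else 0)"
      by (rule integral_restrict_UNIV[symmetric])
    also have "\<dots> = integral UNIV Fc"
      by (rule integral_cong) (simp add: Fc_def indicator_def)
    finally have "integral (box a b) g = integral UNIV Fc" .
    thus ?thesis using integral_lborel[OF Fi] by simp
  qed
  have "(\<lambda>x. if x \<in> box a b then g x else 0) integrable_on UNIV"
    using integrable_on_lborel[OF Fi] by (rule integrable_eq) (simp add: Fc_def indicator_def)
  thus "(\<lambda>x. frechet_derivative f (at x) (axis i 1)) integrable_on box a b"
    unfolding integrable_restrict_UNIV g_def e_def .
  define Inn where "Inn x = (\<integral>s. Fc (x + s *\<^sub>R e) * indicator {0..1} s \<partial>lborel)" for x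
  have Inn_int: "integrable lborel Inn" unfolding Inn_def by (rule L_translate_int(1)[OF Fi]) simp
  have "(\<integral>x. Fc x \<partial>lborel) = (\<integral>x. Inn x \<partial>lborel)"
    using L_translate_int(2)[OF Fi, of 0 1 e] by (simp add: Inn_def)
  also have "\<dots> \<le> (\<integral>x. 2 * indicator (box (a - e) b) x \<partial>lborel)"
  proof (rule integral_mono[OF Inn_int])
    show "integrable lborel (\<lambda>x. 2 * indicator (box (a - e) b) x :: real)"
      by (intro integrable_mult_right integrable_real_indicator) (use emeasure_lborel_box_finite[of "a - e" b] in auto)
    fix x :: "real^'n"
    have ii: "integrable lborel (\<lambda>s. Fc (x + s *\<^sub>R e) * indicator {0..1} s)"
    proof -
      have "integrable lborel (\<lambda>s. indicator {0..1::real} s *\<^sub>R Fc (x + s *\<^sub>R e))"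
        by (rule integrableI_bounded_set_indicator[where B=B]) (auto simp: Fc_def B B0 indicator_def intro!: AE_I2)
      thus ?thesis by (simp add: mult.commute)
    qed
    have "Inn x = integral UNIV (\<lambda>s. Fc (x + s *\<^sub>R e) * indicator {0..1} s)"
      unfolding Inn_def using integral_lborel[OF ii] by simp
    also have "\<dots> = integral UNIV (\<lambda>s. if s \<in> {0..1} then (if x + s *\<^sub>R e \<in> box a b then frechet_derivative f (at (x + s *\<^sub>R e)) e else 0) else 0)"
      by (rule integral_cong) (simp add: Fc_def g_def indicator_def)
    also have "\<dots> = integral {0..1} (\<lambda>s. if x + s *\<^sub>R e \<in> box a b then frechet_derivative f (at (x + s *\<^sub>R e)) e else 0)"
      by (rule integral_restrict_UNIV)
    also have "\<dots> \<le> 2 * indicator (box (a - e) b) x"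
      unfolding e_def by (rule line_int_bound[OF f fb])
    finally show "Inn x \<le> 2 * indicator (box (a - e) b) x" .
  qed
  also have "\<dots> = 2 * measure lborel (box (a - e) b)"
    by (simp add: Bochner_Integration.integral_indicator)
  finally show "integral (box a b) (\<lambda>x. frechet_derivative f (at x) (axis i 1))
           \<le> 2 * measure lborel (box (a - axis i 1) b)"
    using eqHK by (simp add: g_def e_def)
qed



definition lo :: "'n \<Rightarrow> real^'n" where "lo i2 = (\<chi> i. if i = i2 then 0 else -1)"
definition hi :: "real^'n" where "hi = (\<chi> i. 1)"
definition Cb :: "'n \<Rightarrow> (real^'n) set" where "Cb i2 = box (lo i2) hi"
definition Rs :: "'n \<Rightarrow> 'n \<Rightarrow> real \<Rightarrow> (real^'n) set" where
  "Rs i1 i2 d = {x. 2*d \<le> x$i2 \<and> (\<exists>k::int. x$i1 = of_int k * d * (x$i2 - d))}"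
definition Om :: "'n \<Rightarrow> 'n \<Rightarrow> real \<Rightarrow> (real^'n) set" where
  "Om i1 i2 d = Cb i2 - Rs i1 i2 d"

lemma mem_Cb: "x \<in> Cb i2 \<longleftrightarrow> (\<forall>i. (if i = i2 then 0 else -1) < x$i \<and> x$i < 1)"
  by (simp add: Cb_def mem_box_cart lo_def hi_def)

lemma closed_Rs:
  fixes i1 i2 :: "'n::finite"
  assumes d: "d > 0"
  shows "closed (Rs i1 i2 d)"
proof -
  define w where "w x = d * (max (x$i2) (2*d) - d)" for x :: "real^'n"
  have wpos: "w x > 0" for x using d by (simp add: w_def)
  have mx: "max (x$i2) (2*d) \<noteq> d" for x :: "real^'n" using d by (simp add: max_def)
  have "Rs i1 i2 d = {x. 2*d \<le> x$i2} \<inter> (\<lambda>x. x$i1 / w x) -` \<int>"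
  proof (intro set_eqI iffI)
    fix x assume "x \<in> Rs i1 i2 d"
    then obtain k :: int where k: "2*d \<le> x$i2" "x$i1 = of_int k * d * (x$i2 - d)" by (auto simp: Rs_def)
    have "w x = d * (x$i2 - d)" using k(1) by (simp add: w_def max_def)
    hence "x$i1 = of_int k * w x" using k(2) by (simp add: mult.assoc)
    hence "x$i1 / w x = of_int k" using wpos[of x] by simp
    thus "x \<in> {x. 2*d \<le> x$i2} \<inter> (\<lambda>x. x$i1 / w x) -` \<int>" using k(1) by (auto simp: Ints_def)
  next
    fix x assume "x \<in> {x. 2*d \<le> x$i2} \<inter> (\<lambda>x. x$i1 / w x) -` \<int>"
    then obtain k :: int where k: "2*d \<le> x$i2" "x$i1 / w x = of_int k" by (auto simp: Ints_def)
    have "w x = d * (x$i2 - d)" using k(1) by (simp add: w_def max_def)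
    moreover have "x$i1 = of_int k * w x" using k(2) wpos[of x] by (simp add: divide_eq_eq)
    ultimately have "x$i1 = of_int k * d * (x$i2 - d)" by (simp add: mult.assoc)
    thus "x \<in> Rs i1 i2 d" using k(1) by (auto simp: Rs_def)
  qed
  moreover have "closed {x::real^'n. 2*d \<le> x$i2}"
    by (intro closed_Collect_le continuous_intros)
  moreover have "closed ((\<lambda>x. x$i1 / w x) -` \<int>)"
    by (rule continuous_closed_vimage) (use mx d in \<open>auto simp: w_def intro!: continuous_intros\<close>)
  ultimately show ?thesis by auto
qed

lemma open_Om: fixes i1 i2 :: "'n::finite" shows "d > 0 \<Longrightarrow> open (Om i1 i2 d)"
  unfolding Om_def Cb_def by (intro open_Diff open_box closed_Rs)

lemma negligible_Rs:
  fixes i1 i2 :: "'n::finite"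
  assumes ij: "i1 \<noteq> i2"
  shows "negligible (Rs i1 i2 d)"
proof -
  define H where "H k = {x::real^'n. (axis i1 1 - (of_int k * d) *\<^sub>R axis i2 1) \<bullet> x = - (of_int k * d * d)}" for k :: int
  have "Rs i1 i2 d \<subseteq> \<Union> (range H)"
  proof
    fix x assume "x \<in> Rs i1 i2 d"
    then obtain k :: int where k: "x$i1 = of_int k * d * (x$i2 - d)" by (auto simp: Rs_def)
    have "(axis i1 1 - (of_int k * d) *\<^sub>R axis i2 1) \<bullet> x = x$i1 - of_int k * d * x$i2"
      by (simp add: inner_diff_left inner_axis')
    also have "\<dots> = - (of_int k * d * d)" using k by (simp add: algebra_simps)
    finally show "x \<in> \<Union> (range H)" by (auto simp: H_def)
  qed
  moreover have "negligible (\<Union> (range H))"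
  proof (rule negligible_countable_Union)
    show "countable (range H)" by simp
    fix S assume "S \<in> range H"
    then obtain k where S: "S = H k" by auto
    have a1: "(axis i1 1 - (of_int k * d) *\<^sub>R axis i2 1 :: real^'n) $ i1 = 1" using ij by (simp add: axis_def)
    have "axis i1 1 - (of_int k * d) *\<^sub>R axis i2 1 \<noteq> (0::real^'n)"
    proof
      assume "axis i1 1 - (of_int k * d) *\<^sub>R axis i2 1 = (0::real^'n)"
      hence "(axis i1 1 - (of_int k * d) *\<^sub>R axis i2 1 :: real^'n) $ i1 = (0::real^'n) $ i1" by (rule arg_cong)
      with a1 show False by (simp add: axis_def ij)
    qed
    thus "negligible S" unfolding S H_def by (intro negligible_hyperplane) simp
  qed
  ultimately show ?thesis using negligible_subset by blast
qed

lemma starlike_Om: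
  fixes i1 i2 :: "'n::finite"
  assumes d: "0 < d" "d < 1/2" and ij: "i1 \<noteq> i2"
  shows "starlike (Om i1 i2 d)"
  unfolding starlike_def
proof
  define c :: "real^'n" where "c = (\<chi> i. if i = i2 then d else 0)"
  show "c \<in> Om i1 i2 d" using d by (auto simp: Om_def mem_Cb Rs_def c_def)
  show "\<forall>y\<in>Om i1 i2 d. closed_segment c y \<subseteq> Om i1 i2 d"
  proof (intro ballI subsetI)
    fix y z assume y: "y \<in> Om i1 i2 d" and z: "z \<in> closed_segment c y"
    have cC: "c \<in> Cb i2" using d by (auto simp: mem_Cb c_def)
    have yC: "y \<in> Cb i2" and yR: "y \<notin> Rs i1 i2 d" using y by (auto simp: Om_def)
    have "closed_segment c y \<subseteq> Cb i2"
      by (rule closed_segment_subset[OF cC yC]) (simp add: Cb_def convex_box)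
    hence zC: "z \<in> Cb i2" using z by auto
    obtain t where t: "0 \<le> t" "t \<le> 1" "z = (1 - t) *\<^sub>R c + t *\<^sub>R y"
      using z by (auto simp: in_segment)
    have z2: "z$i2 = d + t * (y$i2 - d)" unfolding t(3) by (simp add: c_def algebra_simps)
    have z1: "z$i1 = t * y$i1"
      unfolding t(3) using ij by (simp add: c_def)
    show "z \<in> Om i1 i2 d"
    proof (rule ccontr)
      assume "z \<notin> Om i1 i2 d"
      with zC have "z \<in> Rs i1 i2 d" by (simp add: Om_def)
      then obtain k :: int where k: "2*d \<le> z$i2" "z$i1 = of_int k * d * (z$i2 - d)" by (auto simp: Rs_def)
      have tp: "t * (y$i2 - d) \<ge> d" using k(1) z2 by simp
      hence "t > 0" using d t by (cases "t = 0") auto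
      have yd: "y$i2 - d > 0" using tp \<open>t > 0\<close> d by (smt (verit) mult_nonneg_nonpos)
      have "y$i2 - d \<ge> t * (y$i2 - d)" using t(2) yd by (simp add: mult_left_le_one_le)
      hence y2: "2*d \<le> y$i2" using tp by simp
      have "t * y$i1 = t * (of_int k * d * (y$i2 - d))" using k(2) z1 z2 by (simp add: algebra_simps)
      hence "y$i1 = of_int k * d * (y$i2 - d)" using \<open>t > 0\<close> by simp
      hence "y \<in> Rs i1 i2 d" using y2 by (auto simp: Rs_def)
      with yR show False by simp
    qed
  qed
qed

lemma Om_escape:
  fixes i1 i2 :: "'n::finite"
  assumes d: "0 < d" and ij: "i1 \<noteq> i2" and x: "x \<in> Om i1 i2 d"
  shows "(\<exists>s. \<bar>s\<bar> \<le> 2*d \<and> x + s *\<^sub>R axis i2 1 \<notin> Cb i2) \<or>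
         (\<exists>s. \<bar>s\<bar> \<le> 2*d \<and> x + s *\<^sub>R axis i1 1 \<in> Rs i1 i2 d)"
proof -
  have xC: "x \<in> Cb i2" using x by (simp add: Om_def)
  hence x2: "0 < x$i2" "x$i2 < 1" using mem_Cb[of x i2] by (metis (full_types))+
  show ?thesis
  proof (cases "x$i2 < 2*d")
    case True
    have "x + (- x$i2) *\<^sub>R axis i2 1 \<notin> Cb i2"
      unfolding mem_Cb by (auto intro!: exI[of _ i2])
    moreover have "\<bar>- x$i2\<bar> \<le> 2*d" using True x2 by simp
    ultimately show ?thesis by blast
  next
    case False
    define w where "w = d * (x$i2 - d)"
    have w: "w > 0" using False d by (simp add: w_def)
    have w1: "w \<le> 2*d" using x2 d by (simp add: w_def mult_left_le)
    define k where "k = floor (x$i1 / w)"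
    have "of_int k \<le> x$i1 / w" unfolding k_def by (rule of_int_floor_le)
    hence k1: "of_int k * w \<le> x$i1" using w by (simp add: le_divide_eq)
    have "x$i1 / w < of_int k + 1" unfolding k_def by (rule real_of_int_floor_add_one_gt)
    hence k2: "x$i1 < (of_int k + 1) * w" using w by (simp add: divide_less_eq)
    define s where "s = of_int k * w - x$i1"
    have "\<bar>s\<bar> \<le> 2*d" using k1 k2 w1 by (simp add: s_def algebra_simps abs_if)
    moreover have "x + s *\<^sub>R axis i1 1 \<in> Rs i1 i2 d"
      using False ij by (auto simp: Rs_def s_def w_def axis_def intro!: exI[of _ k])
    ultimately show ?thesis by blast
  qed
qed

lemma Cb_lmeasurable: "Cb i2 \<in> lmeasurable"
  by (simp add: Cb_def)

lemma Cb_pos: fixes i2 :: "'n::finite" shows "0 < measure lebesgue (Cb i2)"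
proof -
  have "measure lebesgue (Cb i2) = integral (Cb i2) (\<lambda>x. 1)"
    by (rule lmeasure_integral[OF Cb_lmeasurable])
  also have "\<dots> > 0"
  proof (rule integral_pos_cart)
    show "open (Cb i2)" unfolding Cb_def by (rule open_box)
    show "(\<chi> i. if i = i2 then 1/2 else 0) \<in> Cb i2" by (simp add: mem_Cb)
    show "(\<lambda>x. 1::real) integrable_on Cb i2"
      using Cb_lmeasurable lmeasurable_iff_integrable_on by blast
  qed auto
  finally show ?thesis .
qed

lemma Om_props:
  fixes i1 i2 :: "'n::finite"
  assumes d: "0 < d" and ij: "i1 \<noteq> i2"
  shows "Om i1 i2 d \<in> sets lebesgue"
    and "emeasure lebesgue (Om i1 i2 d) = emeasure lebesgue (Cb i2)"
    and "measure lebesgue (Om i1 i2 d) = measure lebesgue (Cb i2)"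
    and "\<And>f :: real^'n \<Rightarrow> real. integral (Om i1 i2 d) f = integral (Cb i2) f"
proof -
  have N: "Rs i1 i2 d \<in> null_sets lebesgue" using negligible_Rs[OF ij] negligible_iff_null_sets by blast
  have C: "Cb i2 \<in> sets lebesgue" using Cb_lmeasurable[of i2] unfolding fmeasurable_def by blast
  show "Om i1 i2 d \<in> sets lebesgue" unfolding Om_def using C N by auto
  show e: "emeasure lebesgue (Om i1 i2 d) = emeasure lebesgue (Cb i2)"
    unfolding Om_def by (rule emeasure_Diff_null_set[OF N C])
  show "measure lebesgue (Om i1 i2 d) = measure lebesgue (Cb i2)"
    using e by (simp add: measure_def)
  fix f :: "real^'n \<Rightarrow> real"
  show "integral (Om i1 i2 d) f = integral (Cb i2) f"
  proof (rule integral_spike_set)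
    have "{x \<in> Om i1 i2 d - Cb i2. f x \<noteq> 0} = {}" by (auto simp: Om_def)
    thus "negligible {x \<in> Om i1 i2 d - Cb i2. f x \<noteq> 0}" by (simp only: negligible_empty)
    show "negligible {x \<in> Cb i2 - Om i1 i2 d. f x \<noteq> 0}"
      by (rule negligible_subset[OF negligible_Rs[OF ij]]) (auto simp: Om_def)
  qed
qed



lemma powr_split_bound:
  fixes t K q :: real
  assumes K: "K > 0" and q: "0 \<le> q" "q \<le> 2"
  shows "\<bar>t\<bar> powr q \<le> K powr q + K powr (q - 2) * t\<^sup>2"
proof (cases "\<bar>t\<bar> \<le> K")
  case True
  have "\<bar>t\<bar> powr q \<le> K powr q" by (rule powr_mono2[OF q(1) _ True]) simp
  moreover have "0 \<le> K powr (q - 2) * t\<^sup>2" by simp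
  ultimately show ?thesis by linarith
next
  case False
  hence tp: "\<bar>t\<bar> > 0" using K by simp
  have "\<bar>t\<bar> powr q = \<bar>t\<bar> powr (2 + (q - 2))" by simp
  also have "\<dots> = \<bar>t\<bar> powr 2 * \<bar>t\<bar> powr (q - 2)" by (rule powr_add)
  also have "\<bar>t\<bar> powr 2 = t\<^sup>2" using tp by (simp add: powr_numeral)
  also have "\<bar>t\<bar> powr (q - 2) \<le> K powr (q - 2)"
    by (rule powr_mono2') (use q K False in auto)
  hence "t\<^sup>2 * \<bar>t\<bar> powr (q - 2) \<le> t\<^sup>2 * K powr (q - 2)" by (rule mult_left_mono) simp
  hence "t\<^sup>2 * \<bar>t\<bar> powr (q - 2) \<le> K powr (q - 2) * t\<^sup>2" by (simp add: mult.commute)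
  moreover have "0 \<le> K powr q" by simp
  ultimately show ?thesis by linarith
qed

lemma grad_lower:
  fixes i1 i2 :: "'n::finite" and \<psi> :: "real^'n \<Rightarrow> real"
  assumes d: "0 < d" and ij: "i1 \<noteq> i2" and q: "1 \<le> q" "q < 2"
    and psi: "Cinf0 (Om i1 i2 d) \<psi>" and nrm: "integral UNIV (\<lambda>x. \<bar>\<psi> x\<bar> powr q) = 1"
  shows "((1 / (2 * measure lebesgue (Cb i2))) powr (1/q)) powr (2 - q) / (16 * d\<^sup>2) \<le> integral UNIV (grad_sq \<psi>)"
proof -
  define \<mu> where "\<mu> = measure lebesgue (Cb i2)"
  have \<mu>: "\<mu> > 0" unfolding \<mu>_def by (rule Cb_pos)
  define K where "K = (1 / (2 * \<mu>)) powr (1/q)"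
  have K: "K > 0" using \<mu> by (simp add: K_def)
  have Kq: "K powr q * \<mu> = 1/2"
    using \<mu> q by (simp add: K_def powr_powr)
  have c: "Cinf \<psi>" and cs: "compact (tsupp \<psi>)" and sub: "tsupp \<psi> \<subseteq> Om i1 i2 d"
    using psi by (auto simp: Cinf0_def)
  have z: "\<psi> x = 0" if "x \<notin> Om i1 i2 d" for x
    using tsupp_zero[of x \<psi>] sub that by blast
  have H: "(\<exists>s. \<bar>s\<bar> \<le> 2*d \<and> \<psi> (x + s *\<^sub>R axis i1 1) = 0) \<or> (\<exists>s. \<bar>s\<bar> \<le> 2*d \<and> \<psi> (x + s *\<^sub>R axis i2 1) = 0)" for x
  proof (cases "x \<in> Om i1 i2 d")
    case False
    hence "\<psi> (x + 0 *\<^sub>R axis i1 1) = 0" using z by simp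
    thus ?thesis using d by (intro disjI1 exI[of _ 0]) simp
  next
    case True
    from Om_escape[OF d ij True] show ?thesis
    proof
      assume "\<exists>s. \<bar>s\<bar> \<le> 2*d \<and> x + s *\<^sub>R axis i2 1 \<notin> Cb i2"
      then obtain s where "\<bar>s\<bar> \<le> 2*d" "x + s *\<^sub>R axis i2 1 \<notin> Cb i2" by blast
      thus ?thesis using z[of "x + s *\<^sub>R axis i2 1"] by (auto simp: Om_def)
    next
      assume "\<exists>s. \<bar>s\<bar> \<le> 2*d \<and> x + s *\<^sub>R axis i1 1 \<in> Rs i1 i2 d"
      then obtain s where "\<bar>s\<bar> \<le> 2*d" "x + s *\<^sub>R axis i1 1 \<in> Rs i1 i2 d" by blast
      thus ?thesis using z[of "x + s *\<^sub>R axis i1 1"] by (auto simp: Om_def)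
    qed
  qed
  have P: "integral UNIV (\<lambda>x. (\<psi> x)\<^sup>2) \<le> 2*(2*d)\<^sup>2 * integral UNIV (grad_sq \<psi>)"
    by (rule poincare[OF c cs ij _ H]) (use d in simp)
  have pint: "(\<lambda>x. (\<psi> x)\<^sup>2) integrable_on UNIV"
    by (rule integrable_compact_support[OF _ cs]) (auto intro!: continuous_intros Cinf_cont[OF c] simp: tsupp_zero)
  have qint: "(\<lambda>x. \<bar>\<psi> x\<bar> powr q) integrable_on UNIV"
    using nrm not_integrable_integral by fastforce
  have iint: "(indicator (Cb i2) :: real^'n \<Rightarrow> real) integrable_on UNIV"
    using Cb_lmeasurable[of i2] measurable_integrable[of "Cb i2"] by blast
  have "1 = integral UNIV (\<lambda>x. \<bar>\<psi> x\<bar> powr q)" using nrm by simp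
  also have "\<dots> \<le> integral UNIV (\<lambda>x. K powr q * indicator (Cb i2) x + K powr (q - 2) * (\<psi> x)\<^sup>2)"
  proof (rule integral_le[OF qint])
    show "(\<lambda>x. K powr q * indicator (Cb i2) x + K powr (q - 2) * (\<psi> x)\<^sup>2) integrable_on UNIV"
      by (intro integrable_add integrable_on_mult_right iint pint)
    fix x :: "real^'n"
    show "\<bar>\<psi> x\<bar> powr q \<le> K powr q * indicator (Cb i2) x + K powr (q - 2) * (\<psi> x)\<^sup>2"
    proof (cases "x \<in> Cb i2")
      case True then show ?thesis using powr_split_bound[OF K, of q "\<psi> x"] q by simp
    next
      case False
      hence "\<psi> x = 0" using z by (auto simp: Om_def)
      thus ?thesis by simp
    qed
  qed
  also have "\<dots> = K powr q * \<mu> + K powr (q - 2) * integral UNIV (\<lambda>x. (\<psi> x)\<^sup>2)"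
    using iint pint
    by (simp add: integral_add integrable_on_mult_right integral_mult_right \<mu>_def lmeasure_integral_UNIV[OF Cb_lmeasurable])
  finally have "1/2 \<le> K powr (q - 2) * integral UNIV (\<lambda>x. (\<psi> x)\<^sup>2)" using Kq by simp
  hence "K powr (2 - q) * (1/2) \<le> K powr (2 - q) * (K powr (q - 2) * integral UNIV (\<lambda>x. (\<psi> x)\<^sup>2))"
    by (rule mult_left_mono) simp
  also have "\<dots> = integral UNIV (\<lambda>x. (\<psi> x)\<^sup>2)"
    using K by (simp add: powr_add[symmetric])
  also have "\<dots> \<le> 8 * d\<^sup>2 * integral UNIV (grad_sq \<psi>)" using P by (simp add: power2_eq_square)
  finally have "K powr (2 - q) / 2 \<le> 8 * d\<^sup>2 * integral UNIV (grad_sq \<psi>)" by simp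
  hence "K powr (2 - q) / (16 * d\<^sup>2) \<le> integral UNIV (grad_sq \<psi>)"
    using d by (simp add: divide_simps mult_ac)
  thus ?thesis by (simp add: K_def \<mu>_def)
qed



lemma prod_partial:
  fixes h h' :: "'n::finite \<Rightarrow> real \<Rightarrow> real"
  assumes "\<And>i t. (h i has_real_derivative h' i t) (at t)"
  shows "frechet_derivative (\<lambda>x::real^'n. \<Prod>i\<in>UNIV. h i (x$i)) (at x) (axis k 1)
           = h' k (x$k) * (\<Prod>j\<in>UNIV - {k}. h j (x$j))"
proof -
  have "((\<lambda>x::real^'n. \<Prod>i\<in>UNIV. h i (x$i)) has_derivative
          (\<lambda>y. \<Sum>i\<in>UNIV. (h' i (x$i) * y$i) * (\<Prod>j\<in>UNIV - {i}. h j (x$j)))) (at x)"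
    by (rule has_derivative_prod) (rule comp_nth_deriv[OF assms])
  hence "frechet_derivative (\<lambda>x::real^'n. \<Prod>i\<in>UNIV. h i (x$i)) (at x) =
          (\<lambda>y. \<Sum>i\<in>UNIV. (h' i (x$i) * y$i) * (\<Prod>j\<in>UNIV - {i}. h j (x$j)))"
    by (rule frechet_derivative_at[symmetric])
  hence "frechet_derivative (\<lambda>x::real^'n. \<Prod>i\<in>UNIV. h i (x$i)) (at x) (axis k 1)
     = (\<Sum>i\<in>UNIV. (h' i (x$i) * (axis k 1 :: real^'n)$i) * (\<Prod>j\<in>UNIV - {i}. h j (x$j)))" by simp
  also have "\<dots> = (\<Sum>i\<in>UNIV. if i = k then h' k (x$k) * (\<Prod>j\<in>UNIV - {k}. h j (x$j)) else 0)"
    by (intro sum.cong) (auto simp: axis_def)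
  also have "\<dots> = h' k (x$k) * (\<Prod>j\<in>UNIV - {k}. h j (x$j))" by simp
  finally show ?thesis .
qed

lemma bq1: "bq [:1:] 0 t = (if \<bar>t\<bar> < 1 then exp (-1/(1-t\<^sup>2)) else 0)"
  by (simp add: bq_def)

lemma bq1_nonneg: "0 \<le> bq [:1:] 0 t" by (simp add: bq1)

lemma bq1_le1: "bq [:1:] 0 t \<le> 1"
proof (cases "\<bar>t\<bar> < 1")
  case True
  hence "1 - t\<^sup>2 > 0" by (simp add: abs_square_less_1)
  hence "-1/(1-t\<^sup>2) \<le> 0" by simp
  thus ?thesis using True by (simp add: bq1)
qed (simp add: bq1)

lemma bq1_pos: "\<bar>t\<bar> < 1 \<Longrightarrow> 0 < bq [:1:] 0 t" by (simp add: bq1)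

lemma bq1_zero: "bq [:1:] 0 t \<noteq> 0 \<Longrightarrow> \<bar>t\<bar> < 1" by (simp add: bq1 split: if_splits)

lemma bq_cont: "continuous_on UNIV (bq p n)"
  using bq_deriv DERIV_isCont continuous_at_imp_continuous_on by blast

lemma exists_bump:
  fixes U :: "(real^'n) set" and q :: real
  assumes U: "open U" "p \<in> U" and q: "q > 0"
  shows "\<exists>\<psi>. Cinf0 U \<psi> \<and> integral UNIV (\<lambda>x. \<bar>\<psi> x\<bar> powr q) = 1"
proof -
  obtain r where r: "r > 0" "cball p r \<subseteq> U" using U open_contains_cball by blast
  define \<rho> where "\<rho> = r / real CARD('n)"
  have \<rho>: "\<rho> > 0" using r by (simp add: \<rho>_def)
  define B where "B i t = bq [:1:] 0 ((1/\<rho>) * t + (-(p$i)/\<rho>))" for i t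
  define \<psi>0 where "\<psi>0 x = (\<Prod>i\<in>UNIV. B i (x$i))" for x :: "real^'n"
  define i0 :: 'n where "i0 = undefined"
  define \<psi>a where "\<psi>a a x = (\<Prod>i\<in>UNIV. (if i = i0 then a else 1) * B i (x$i))" for a and x :: "real^'n"
  have \<psi>a_eq: "\<psi>a a x = a * \<psi>0 x" for a x
    by (simp add: \<psi>a_def \<psi>0_def prod.distrib)
  have \<psi>a_D: "\<psi>a a \<in> Dfam" for a
    unfolding Dfam_def Sfam_def \<psi>a_def B_def
    by (intro CollectI exI[of _ "\<lambda>i t. (if i = i0 then a else 1) * bq [:1:] 0 ((1/\<rho>) * t + (-(p$i)/\<rho>))"]) blast
  define Q where "Q = cbox (\<chi> i. p$i - \<rho>) (\<chi> i. p$i + \<rho>)"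
  have nz: "x \<in> Q" if "\<psi>0 x \<noteq> 0" for x
  proof -
    have "\<forall>i. B i (x$i) \<noteq> 0" using that by (auto simp: \<psi>0_def)
    hence lt: "\<bar>(1/\<rho>) * x$i + (-(p$i)/\<rho>)\<bar> < 1" for i unfolding B_def using bq1_zero by blast
    have "\<bar>x$i - p$i\<bar> < \<rho>" for i
    proof -
      have e: "(1/\<rho>) * x$i + (-(p$i)/\<rho>) = (x$i - p$i)/\<rho>" using \<rho> by (simp add: field_simps)
      have "\<bar>x$i - p$i\<bar> / \<rho> < 1" using lt[of i] \<rho> unfolding e by (simp add: abs_divide)
      thus ?thesis using \<rho> by (simp add: divide_less_eq)
    qed
    thus ?thesis unfolding Q_def mem_box_cart
    proof (intro allI)
      fix i assume "\<And>i. \<bar>x$i - p$i\<bar> < \<rho>"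
      hence "\<bar>x$i - p$i\<bar> < \<rho>" by blast
      thus "(\<chi> i. p$i - \<rho>)$i \<le> x$i \<and> x$i \<le> (\<chi> i. p$i + \<rho>)$i" by (simp add: abs_less_iff)
    qed
  qed
  have QU: "Q \<subseteq> U"
  proof
    fix x assume x: "x \<in> Q"
    have "dist p x = norm (x - p)" by (simp add: dist_norm norm_minus_commute)
    also have "\<dots> \<le> (\<Sum>i\<in>UNIV. \<bar>(x - p)$i\<bar>)" by (rule norm_le_l1_cart)
    also have "\<dots> \<le> (\<Sum>i\<in>(UNIV::'n set). \<rho>)"
    proof (intro sum_mono)
      fix i
      have "p$i - \<rho> \<le> x$i \<and> x$i \<le> p$i + \<rho>" using x by (simp add: Q_def mem_box_cart)
      thus "\<bar>(x - p)$i\<bar> \<le> \<rho>" by auto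
    qed
    also have "\<dots> = r" by (simp add: \<rho>_def)
    finally show "x \<in> U" using r(2) by auto
  qed
  have ts0: "tsupp \<psi>0 \<subseteq> Q"
    unfolding tsupp_def by (rule closure_minimal) (use nz in \<open>auto simp: Q_def\<close>)
  have cQ: "compact Q" by (simp add: Q_def)
  have c0: "continuous_on UNIV \<psi>0"
  proof -
    have "continuous_on UNIV (\<psi>a 1)" by (rule Cinf_cont[OF Dfam_Cinf[OF \<psi>a_D]])
    moreover have "\<psi>a 1 = \<psi>0" by (auto simp: \<psi>a_eq fun_eq_iff)
    ultimately show ?thesis by simp
  qed
  have nn0: "0 \<le> \<psi>0 x" for x by (simp add: \<psi>0_def B_def bq1_nonneg prod_nonneg)
  define I0 where "I0 = integral UNIV (\<lambda>x. \<bar>\<psi>0 x\<bar> powr q)"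
  have cq: "continuous_on UNIV (\<lambda>x. \<bar>\<psi>0 x\<bar> powr q)"
    by (rule continuous_on_powr') (use q in \<open>auto intro!: continuous_intros c0\<close>)
  have iq: "(\<lambda>x. \<bar>\<psi>0 x\<bar> powr q) integrable_on UNIV"
    by (rule integrable_compact_support[OF cq cQ]) (use nz in auto)
  have "0 < \<psi>0 p" unfolding \<psi>0_def B_def using \<rho>
    by (intro prod_pos ballI bq1_pos) (simp add: field_simps)
  hence I0: "0 < I0" unfolding I0_def
    by (intro integral_pos_cart[OF cq, of UNIV p] iq) auto
  define a where "a = I0 powr (-1/q)"
  have a: "a > 0" using I0 by (simp add: a_def)
  have "integral UNIV (\<lambda>x. \<bar>\<psi>a a x\<bar> powr q) = integral UNIV (\<lambda>x. a powr q * \<bar>\<psi>0 x\<bar> powr q)"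
    using a by (simp add: \<psi>a_eq abs_mult powr_mult)
  also have "\<dots> = a powr q * I0" by (simp add: I0_def)
  also have "a powr q = I0 powr (-1)" using q by (simp add: a_def powr_powr)
  also have "I0 powr (-1) * I0 = 1" using I0 by (simp add: powr_minus divide_simps)
  finally have norm1: "integral UNIV (\<lambda>x. \<bar>\<psi>a a x\<bar> powr q) = 1" .
  have "tsupp (\<psi>a a) = tsupp \<psi>0" using a by (simp add: tsupp_def \<psi>a_eq)
  hence ts: "tsupp (\<psi>a a) \<subseteq> Q" using ts0 by simp
  have "compact (tsupp (\<psi>a a))"
  proof -
    have "compact (Q \<inter> tsupp (\<psi>a a))" by (rule compact_Int_closed[OF cQ]) (simp add: tsupp_def)
    thus ?thesis using ts by (simp add: Int_absorb1)
  qed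
  hence "Cinf0 U (\<psi>a a)" using ts QU Dfam_Cinf[OF \<psi>a_D] by (auto simp: Cinf0_def)
  thus ?thesis using norm1 by blast
qed



definition PB :: "'n::finite \<Rightarrow> real" where
  "PB i2 = (\<Sum>j\<in>UNIV. 2 * measure lborel (box (lo i2 - axis j 1) hi))"

lemma tsupp_compact_sub:
  fixes f :: "real^'n \<Rightarrow> 'a::real_normed_vector" and g :: "real^'n \<Rightarrow> 'b::real_normed_vector"
  assumes "compact (tsupp g)" "\<And>x. f x \<noteq> 0 \<Longrightarrow> g x \<noteq> 0"
  shows "compact (tsupp f)"
proof -
  have "tsupp f \<subseteq> tsupp g" unfolding tsupp_def by (rule closure_mono) (use assms(2) in auto)
  moreover have "compact (tsupp g \<inter> tsupp f)" by (rule compact_Int_closed[OF assms(1)]) (simp add: tsupp_def)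
  ultimately show ?thesis by (simp add: Int_absorb1)
qed

lemma perim_upper:
  fixes \<phi> :: "real^'n::finite \<Rightarrow> real^'n"
  assumes c: "\<forall>i. Cinf (\<lambda>x. \<phi> x $ i)" and cs: "compact (tsupp \<phi>)" and nb: "\<forall>x. norm (\<phi> x) \<le> 1"
  shows "integral (Cb i2) (divergence \<phi>) \<le> PB i2"
proof -
  have cj: "compact (tsupp (\<lambda>x. \<phi> x $ j))" for j
    by (rule tsupp_compact_sub[OF cs]) auto
  have bj: "\<bar>\<phi> y $ j\<bar> \<le> 1" for y j using nb component_le_norm_cart[of "\<phi> y" j] by (metis order_trans real_norm_def)
  have "integral (Cb i2) (divergence \<phi>) =
        (\<Sum>j\<in>UNIV. integral (Cb i2) (\<lambda>x. frechet_derivative (\<lambda>y. \<phi> y $ j) (at x) (axis j 1)))"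
    unfolding divergence_def Cb_def
    by (rule integral_sum) (auto intro: comp_bound(1)[OF c[rule_format] cj bj])
  also have "\<dots> \<le> PB i2"
    unfolding PB_def Cb_def by (rule sum_mono) (rule comp_bound(2)[OF c[rule_format] cj bj])
  finally show ?thesis .
qed

lemma Cinf_zero: "Cinf (\<lambda>x::real^'n. 0)"
  unfolding Cinf_def by (intro exI[of _ "{\<lambda>x. 0}"]) (simp add: frechet_derivative_const)

lemma bq_dnum1: "\<bar>u\<bar> < 1 \<Longrightarrow> bq (dnum [:1:] 0) 2 u = -2*u * exp (-1/(1-u\<^sup>2)) / (1-u\<^sup>2)^2"
  by (simp add: bq_def poly_dnum)

lemma perim_pos:
  fixes i1 i2 :: "'n::finite"
  shows "\<exists>\<phi>::real^'n \<Rightarrow> real^'n. (\<forall>i. Cinf (\<lambda>x. \<phi> x $ i)) \<and> compact (tsupp \<phi>) \<and>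
            (\<forall>x. norm (\<phi> x) \<le> 1) \<and> 0 < integral (Cb i2) (divergence \<phi>)"
proof -
  define cc where "cc i = (if i = i1 then -1/2 else 0::real)" for i
  define g where "g i t = 1 * bq [:1:] 0 ((1/2) * t + cc i)" for i t
  define g' where "g' i t = (1 * (1/2)) * bq (dnum [:1:] 0) (0+2) ((1/2) * t + cc i)" for i t
  have gd: "(g i has_real_derivative g' i t) (at t)" for i t
    unfolding g_def g'_def
    by (rule derivative_eq_intros DERIV_chain2[OF bq_deriv] refl | simp)+
  define G where "G x = (\<Prod>i\<in>UNIV. g i (x$i))" for x :: "real^'n"
  have GD: "G \<in> Dfam" unfolding Dfam_def Sfam_def G_def[abs_def] g_def
    by (intro CollectI exI[of _ "\<lambda>i t. 1 * bq [:1:] 0 ((1/2) * t + cc i)"]) blast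
  have Gc: "Cinf G" by (rule Dfam_Cinf[OF GD])
  have gnn: "0 \<le> g i t" for i t by (simp add: g_def bq1_nonneg)
  have gle: "g i t \<le> 1" for i t by (simp add: g_def bq1_le1)
  have Gb: "\<bar>G x\<bar> \<le> 1" for x
    using gnn gle by (simp add: G_def prod_nonneg prod_le_1)
  define Q :: "(real^'n) set" where "Q = cbox (\<chi> i. -3) (\<chi> i. 3)"
  have GQ: "x \<in> Q" if "G x \<noteq> 0" for x
  proof -
    have "g i (x$i) \<noteq> 0" for i using that by (auto simp: G_def)
    hence "\<bar>(1/2) * x$i + cc i\<bar> < 1" for i using bq1_zero by (auto simp: g_def)
    hence "-3 \<le> x$i \<and> x$i \<le> 3" for i
    proof -
      assume a: "\<And>i. \<bar>(1/2) * x$i + cc i\<bar> < 1"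
      show ?thesis using a[of i] by (cases "i = i1") (auto simp: cc_def abs_less_iff)
    qed
    thus ?thesis by (simp add: Q_def mem_box_cart)
  qed
  have tG: "tsupp G \<subseteq> Q" unfolding tsupp_def by (rule closure_minimal) (use GQ in \<open>auto simp: Q_def\<close>)
  have cG: "compact (tsupp G)"
  proof -
    have "compact (Q \<inter> tsupp G)" by (rule compact_Int_closed) (auto simp: Q_def tsupp_def)
    thus ?thesis using tG by (simp add: Int_absorb1)
  qed
  define \<phi> :: "real^'n \<Rightarrow> real^'n" where "\<phi> x = (\<chi> j. if j = i1 then G x else 0)" for x
  have comp: "(\<lambda>x. \<phi> x $ j) = (if j = i1 then G else (\<lambda>x. 0))" for j
    by (auto simp: \<phi>_def fun_eq_iff)
  have c1: "\<forall>i. Cinf (\<lambda>x. \<phi> x $ i)"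
  proof
    fix i show "Cinf (\<lambda>x. \<phi> x $ i)"
    proof (cases "i = i1")
      case True then show ?thesis by (simp add: comp Gc)
    next
      case False then show ?thesis using Cinf_zero[where 'n='n] by (simp add: comp)
    qed
  qed
  have c2: "compact (tsupp \<phi>)"
    by (rule tsupp_compact_sub[OF cG]) (auto simp: \<phi>_def vec_eq_iff split: if_splits)
  have c3: "\<forall>x. norm (\<phi> x) \<le> 1"
  proof
    fix x
    have "norm (\<phi> x) \<le> (\<Sum>j\<in>UNIV. \<bar>\<phi> x $ j\<bar>)" by (rule norm_le_l1_cart)
    also have "\<dots> = \<bar>G x\<bar>" by (simp add: \<phi>_def if_distrib cong: if_cong)
    finally show "norm (\<phi> x) \<le> 1" using Gb[of x] by simp
  qed
  define dG where "dG x = frechet_derivative G (at x) (axis i1 1)" for x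
  have div: "divergence \<phi> = dG"
  proof
    fix x
    have "divergence \<phi> x = (\<Sum>j\<in>UNIV. if j = i1 then dG x else 0)"
      unfolding divergence_def by (intro sum.cong refl) (simp add: comp dG_def frechet_derivative_const)
    thus "divergence \<phi> x = dG x" by simp
  qed
  have dGform: "dG x = g' i1 (x$i1) * (\<Prod>j\<in>UNIV - {i1}. g j (x$j))" for x
    unfolding dG_def G_def[abs_def] by (rule prod_partial[OF gd])
  have dGc: "continuous_on UNIV dG" unfolding dG_def by (rule Cinf_partial_cont[OF Gc])
  have pos: "0 < dG x" if "x \<in> Cb i2" for x
  proof -
    have xr: "-1 < x$i \<and> x$i < 1" for i
    proof -
      have "(if i = i2 then 0 else -1) < x$i \<and> x$i < 1" using that by (simp add: mem_Cb)
      thus ?thesis by (cases "i = i2") auto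
    qed
    define u where "u = (1/2) * x$i1 + cc i1"
    have u: "-1 < u" "u < 0" using xr[of i1] by (auto simp: u_def cc_def)
    hence ua: "\<bar>u\<bar> < 1" by simp
    have u2: "0 < 1 - u\<^sup>2" using ua by (simp add: abs_square_less_1)
    have "g' i1 (x$i1) = (1/2) * (-2*u * exp (-1/(1-u\<^sup>2)) / (1-u\<^sup>2)^2)"
      using bq_dnum1[OF ua] by (simp add: g'_def u_def numeral_2_eq_2)
    moreover have "0 < -2*u * exp (-1/(1-u\<^sup>2)) / (1-u\<^sup>2)^2"
    proof -
      have "0 < -2*u" using u by simp
      moreover have "0 < exp (-1/(1-u\<^sup>2))" by simp
      moreover have "0 < (1-u\<^sup>2)^2" using u2 by simp
      ultimately show ?thesis by (metis divide_pos_pos mult_pos_pos)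
    qed
    ultimately have "0 < g' i1 (x$i1)" by simp
    moreover have "0 < (\<Prod>j\<in>UNIV - {i1}. g j (x$j))"
    proof (rule prod_pos)
      fix j assume "j \<in> UNIV - {i1}"
      hence "cc j = 0" by (simp add: cc_def)
      moreover have "\<bar>(1/2) * x$j\<bar> < 1" using xr[of j] by auto
      ultimately show "0 < g j (x$j)" by (simp add: g_def bq1_pos)
    qed
    ultimately show ?thesis by (simp add: dGform)
  qed
  have "0 < integral (Cb i2) dG"
  proof (rule integral_pos_cart[OF dGc])
    show "open (Cb i2)" unfolding Cb_def by (rule open_box)
    show "(\<chi> i. if i = i2 then 1/2 else 0) \<in> Cb i2" by (simp add: mem_Cb)
    thus "0 < dG (\<chi> i. if i = i2 then 1/2 else 0)" by (rule pos)
    show "\<And>x. x \<in> Cb i2 \<Longrightarrow> 0 \<le> dG x" using pos less_imp_le by blast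
    show "dG integrable_on Cb i2"
      unfolding dG_def Cb_def by (rule comp_bound(1)[OF Gc cG Gb])
  qed
  thus ?thesis using c1 c2 c3 div by auto
qed



lemma two_indices:
  assumes "CARD('n) \<ge> 2"
  obtains i1 i2 :: "'n::finite" where "i1 \<noteq> i2"
proof -
  obtain i1 :: 'n where True by blast
  have "UNIV \<noteq> {i1}"
  proof
    assume "UNIV = {i1}"
    hence "CARD('n) = card {i1}" by (simp only:)
    hence "CARD('n) = 1" by simp
    with assms show False by simp
  qed
  then obtain i2 where "i2 \<noteq> i1" by blast
  thus ?thesis using that by blast
qed

lemma perimeter_Om:
  fixes i1 i2 :: "'n::finite"
  assumes "0 < d" "i1 \<noteq> i2"
  shows "perimeter (Om i1 i2 d) = perimeter (Cb i2)"
  unfolding perimeter_def using Om_props(4)[OF assms] by simp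

lemma perimeter_Cb:
  fixes i2 :: "'n::finite"
  shows "0 < real_of_ereal (perimeter (Cb i2)) \<and> perimeter (Cb i2) = ereal (real_of_ereal (perimeter (Cb i2)))"
proof -
  have up: "perimeter (Cb i2) \<le> ereal (PB i2)"
    unfolding perimeter_def by (rule SUP_least) (auto intro: perim_upper)
  obtain \<phi> :: "real^'n \<Rightarrow> real^'n" where \<phi>: "\<forall>i. Cinf (\<lambda>x. \<phi> x $ i)" "compact (tsupp \<phi>)"
      "\<forall>x. norm (\<phi> x) \<le> 1" "0 < integral (Cb i2) (divergence \<phi>)"
    using perim_pos[of i2] by blast
  have lo: "ereal (integral (Cb i2) (divergence \<phi>)) \<le> perimeter (Cb i2)"
    unfolding perimeter_def by (rule SUP_upper) (use \<phi> in auto)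
  have fin: "\<bar>perimeter (Cb i2)\<bar> \<noteq> \<infinity>" using up lo by auto
  hence e: "perimeter (Cb i2) = ereal (real_of_ereal (perimeter (Cb i2)))" by (simp add: ereal_real)
  have "integral (Cb i2) (divergence \<phi>) \<le> real_of_ereal (perimeter (Cb i2))"
    using lo e by (metis ereal_less_eq(3))
  thus ?thesis using e \<phi>(4) by simp
qed

theorem propositionA2:
  fixes q :: real
  assumes "CARD('n::finite) \<ge> 2" and "1 \<le> q" and "q < 2"
  shows "\<forall>M::real. \<exists>\<Omega> :: (real^'n) set. open \<Omega> \<and> simply_connected \<Omega> \<and>
           \<Omega> \<in> sets lebesgue \<and> 0 < emeasure lebesgue \<Omega> \<and> emeasure lebesgue \<Omega> < \<infinity> \<and>
           perimeter \<Omega> < \<infinity> \<and> F2q q \<Omega> > M"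
proof
  fix M :: real
  obtain i1 i2 :: 'n where ij: "i1 \<noteq> i2" using two_indices[OF assms(1)] by blast
  define \<mu> where "\<mu> = measure lebesgue (Cb i2)"
  have \<mu>: "\<mu> > 0" unfolding \<mu>_def by (rule Cb_pos)
  define p where "p = real_of_ereal (perimeter (Cb i2))"
  have p: "p > 0" "perimeter (Cb i2) = ereal p" using perimeter_Cb[of i2] by (auto simp: p_def)
  define \<kappa> where "\<kappa> = ((1 / (2 * \<mu>)) powr (1/q)) powr (2 - q) / 16"
  have \<kappa>: "\<kappa> > 0" using \<mu> by (simp add: \<kappa>_def)
  define cst where "cst = (\<mu> powr (1/2 + 1/q) / p)\<^sup>2"
  have cst: "cst > 0" using \<mu> p by (simp add: cst_def)
  define d where "d = min (1/4) (sqrt (\<kappa> * cst / (\<bar>M\<bar> + 1)))"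
  have d: "0 < d" "d < 1/2" using \<kappa> cst by (auto simp: d_def)
  have d2: "d\<^sup>2 \<le> \<kappa> * cst / (\<bar>M\<bar> + 1)"
  proof -
    have "d \<le> sqrt (\<kappa> * cst / (\<bar>M\<bar> + 1))" by (simp add: d_def)
    hence "d\<^sup>2 \<le> (sqrt (\<kappa> * cst / (\<bar>M\<bar> + 1)))\<^sup>2" using d by (intro power_mono) auto
    thus ?thesis using \<kappa> cst by simp
  qed
  define \<Omega> where "\<Omega> = Om i1 i2 d"
  have sl: "starlike \<Omega>" unfolding \<Omega>_def by (rule starlike_Om[OF d ij])
  then obtain c where c: "c \<in> \<Omega>" by (auto simp: starlike_def)
  have op: "open \<Omega>" unfolding \<Omega>_def by (rule open_Om[OF d(1)])
  have em: "emeasure lebesgue \<Omega> = ennreal \<mu>"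
    unfolding \<Omega>_def Om_props(2)[OF d(1) ij] \<mu>_def
    by (rule emeasure_eq_measure2) (rule Cb_lmeasurable)
  have per: "perimeter \<Omega> = ereal p" unfolding \<Omega>_def perimeter_Om[OF d(1) ij] by (rule p(2))
  have meas: "measure lebesgue \<Omega> = \<mu>" unfolding \<Omega>_def \<mu>_def by (rule Om_props(3)[OF d(1) ij])
  have lam: "\<kappa> / d\<^sup>2 \<le> lambda2q q \<Omega>"
    unfolding lambda2q_def
  proof (rule cInf_greatest)
    obtain \<psi> where "Cinf0 \<Omega> \<psi>" "integral UNIV (\<lambda>x. \<bar>\<psi> x\<bar> powr q) = 1"
      using exists_bump[OF op c, of q] assms(2) by auto
    thus "{integral UNIV (grad_sq \<psi>) |\<psi>. Cinf0 \<Omega> \<psi> \<and> integral UNIV (\<lambda>x. \<bar>\<psi> x\<bar> powr q) = 1} \<noteq> {}"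
      by blast
    fix v assume "v \<in> {integral UNIV (grad_sq \<psi>) |\<psi>. Cinf0 \<Omega> \<psi> \<and> integral UNIV (\<lambda>x. \<bar>\<psi> x\<bar> powr q) = 1}"
    then obtain \<psi> where \<psi>: "v = integral UNIV (grad_sq \<psi>)" "Cinf0 \<Omega> \<psi>" "integral UNIV (\<lambda>x. \<bar>\<psi> x\<bar> powr q) = 1"
      by blast
    have "((1 / (2 * measure lebesgue (Cb i2))) powr (1/q)) powr (2 - q) / (16 * d\<^sup>2) \<le> v"
      unfolding \<psi>(1) by (rule grad_lower[OF d(1) ij assms(2,3)]) (use \<psi> in \<open>auto simp: \<Omega>_def\<close>)
    thus "\<kappa> / d\<^sup>2 \<le> v" by (simp add: \<kappa>_def \<mu>_def)
  qed
  have F: "F2q q \<Omega> = lambda2q q \<Omega> * cst"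
    by (simp add: F2q_def meas per cst_def)
  have "M < \<bar>M\<bar> + 1" by simp
  also have "\<bar>M\<bar> + 1 \<le> \<kappa> * cst / d\<^sup>2"
    using d2 d \<kappa> cst by (simp add: field_simps)
  also have "\<kappa> * cst / d\<^sup>2 = (\<kappa> / d\<^sup>2) * cst" by simp
  also have "\<dots> \<le> lambda2q q \<Omega> * cst" by (rule mult_right_mono[OF lam]) (use cst in simp)
  finally have "M < F2q q \<Omega>" using F by simp
  moreover have "simply_connected \<Omega>" by (rule starlike_imp_simply_connected[OF sl])
  moreover have "\<Omega> \<in> sets lebesgue" unfolding \<Omega>_def by (rule Om_props(1)[OF d(1) ij])
  ultimately show "\<exists>\<Omega> :: (real^'n) set. open \<Omega> \<and> simply_connected \<Omega> \<and>
           \<Omega> \<in> sets lebesgue \<and> 0 < emeasure lebesgue \<Omega> \<and> emeasure lebesgue \<Omega> < \<infinity> \<and>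
           perimeter \<Omega> < \<infinity> \<and> F2q q \<Omega> > M"
    using op em per \<mu> by (intro exI[of _ \<Omega>]) auto
qed

end
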